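(* For all positive integers $k$ and $r$, $$W(k+r-1,r)=\frac{(-1)^{k+r-1}2^r}{(k-1)!(r-1)!}\int_0^1\frac{\log^{k-1}\!\left(\frac{1-t}{1+t}\right)\arctan(t)^{r-1}}{1+t^2}\,dt,$$ $$\bar T(\{1\}_{r-1},k)=\frac{(-1)^{k+r-1}2^r}{(k-1)!(r-1)!}\int_0^1\frac{\log^{k-1}\!\left(\frac{1-t}{1+t}\right)\left(\frac{\pi}{4}-\arctan(t)\right)^{r-1}}{1+t^2}\,dt.$$
   Context: $\{1\}_a$ denotes the sequence of $a$ ones. For positive integers $k_1,\dots,k_r$, $\bar T(k_1,\ldots,k_r):=2^r\sum_{0<n_1<\cdots<n_r}\frac{(-1)^{n_r}}{(2n_1-1)^{k_1}(2n_2-2)^{k_2}\cdots(2n_r-r)^{k_r}}$. $I(k,r)$ is the set of tuples $(k_1,\dots,k_r)$ of positive integers with sum $k$, and $W(k,r):=\sum_{(k_1,\dots,k_r)\in I(k,r)}\bar T(k_1,\dots,k_r)$. *)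

theory Defs
  imports "HOL-Analysis.Analysis"
begin

definition idx_set :: "nat \<Rightarrow> nat \<Rightarrow> nat list set" where
  "idx_set r N = {ns. length ns = r \<and> sorted_wrt (<) ns \<and> (\<forall>x\<in>set ns. 0 < x \<and> x < N)}"

definition Tbar_term :: "nat list \<Rightarrow> nat list \<Rightarrow> real" where
  "Tbar_term ks ns = (-1) ^ (last ns) /
     (\<Prod>j<length ks. (2 * real (ns ! j) - real (j + 1)) ^ (ks ! j))"

text \<open>Tbar(k_1,...,k_r), the multiple series summed in the order of n_r
  (limit of partial sums over n_r < N).\<close>
definition Tbar :: "nat list \<Rightarrow> real" where
  "Tbar ks = 2 ^ length ks *
     lim (\<lambda>N. \<Sum>ns\<in>idx_set (length ks) N. Tbar_term ks ns)"

definition I_set :: "nat \<Rightarrow> nat \<Rightarrow> nat list set" where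
  "I_set k r = {ks. length ks = r \<and> (\<forall>x\<in>set ks. 0 < x) \<and> sum_list ks = k}"

definition W :: "nat \<Rightarrow> nat \<Rightarrow> real" where
  "W k r = (\<Sum>ks\<in>I_set k r. Tbar ks)"

end

theory Submission imports Defs "HOL-Real_Asymp.Real_Asymp" begin


definition lg :: "real \<Rightarrow> nat \<Rightarrow> real \<Rightarrow> real" where
  "lg t j s = (ln t - ln s)^j / fact j"

lemma lg_0[simp]: "lg t 0 s = 1" by (simp add: lg_def)

lemma lg_same: "lg t (Suc j) t = 0" by (simp add: lg_def)

lemma lg_deriv:
  assumes "s > 0"
  shows "((lg t (Suc j)) has_real_derivative (- lg t j s / s)) (at s)"
proof -
  have "((\<lambda>s. (ln t - ln s)^(Suc j)) has_real_derivative (real (Suc j) * (ln t - ln s)^j * (0 - inverse s))) (at s)"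
    using assms apply (auto intro!: derivative_eq_intros)
    apply (cases j) apply (auto simp: field_simps)
    done
  then have "((\<lambda>s. (ln t - ln s)^(Suc j) / fact (Suc j)) has_real_derivative (real (Suc j) * (ln t - ln s)^j * (0 - inverse s)) / fact (Suc j)) (at s)"
    by (rule DERIV_cdivide)
  moreover have "(real (Suc j) * (ln t - ln s)^j * (0 - inverse s)) / fact (Suc j) = - lg t j s / s"
  proof -
    have "(real (Suc j) * (ln t - ln s)^j * (0 - inverse s)) / fact (Suc j)
        = (real (Suc j) * ((ln t - ln s)^j * (0 - inverse s))) / (real (Suc j) * fact j)"
      by (simp add: fact_Suc mult.assoc)
    also have "\<dots> = ((ln t - ln s)^j * (0 - inverse s)) / fact j"
      by (rule mult_divide_mult_cancel_left) simp
    finally show ?thesis unfolding lg_def by (simp add: field_simps)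
  qed
  ultimately show ?thesis unfolding lg_def by simp
qed

lemma lg_nonneg: "0 < s \<Longrightarrow> s \<le> t \<Longrightarrow> lg t j s \<ge> 0"
  unfolding lg_def by (intro divide_nonneg_pos zero_le_power) auto

lemma tendsto_s_lnpow: "((\<lambda>s::real. s * (c - ln s)^j) \<longlongrightarrow> 0) (at_right 0)"
  by real_asymp

lemma tendsto_pow_lg:
  assumes "x \<ge> 1"
  shows "((\<lambda>s. s^x * lg t j s) \<longlongrightarrow> 0) (at_right 0)"
proof -
  have a: "((\<lambda>s::real. s * (ln t - ln s)^j) \<longlongrightarrow> 0) (at_right 0)"
    by (rule tendsto_s_lnpow)
  have lim: "((\<lambda>s::real. s * (ln t - ln s)^j / fact j) \<longlongrightarrow> 0) (at_right 0)"
    using tendsto_divide[OF a tendsto_const[of "fact j"]] by simp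
  have ev: "\<forall>\<^sub>F s in at_right 0. norm (s^x * lg t j s) \<le> norm (s * (ln t - ln s)^j / fact j)"
  proof -
    have "\<forall>\<^sub>F s in at_right (0::real). s < 1"
      by (rule eventually_at_rightI[of 0 1]) auto
    moreover have "\<forall>\<^sub>F s in at_right (0::real). s > 0"
      by (simp add: eventually_at_right_less)
    ultimately show ?thesis
    proof eventually_elim
      case (elim s)
      obtain y where y: "x = Suc y" using assms by (cases x) auto
      have "s^y \<le> 1" using elim by (intro power_le_one) auto
      hence sx: "s^x \<le> s" using elim y by (simp add: mult_left_le)
      have "norm (s^x * lg t j s) = s^x * (\<bar>(ln t - ln s)^j\<bar> / fact j)"
        using elim by (simp add: lg_def abs_mult)
      also have "\<dots> \<le> s * (\<bar>(ln t - ln s)^j\<bar> / fact j)"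
        by (rule mult_right_mono[OF sx]) simp
      also have "\<dots> = norm (s * (ln t - ln s)^j / fact j)"
        using elim by (simp add: abs_mult)
      finally show ?case .
    qed
  qed
  show ?thesis
    by (rule Lim_null_comparison[OF ev tendsto_norm_zero[OF lim]])
qed

lemma cont_pow_lg:
  assumes "x \<ge> 1" "0 \<le> t"
  shows "continuous_on {0..t} (\<lambda>s. s^x * lg t j s)"
proof (rule continuous_on_eq_continuous_within[THEN iffD2], intro ballI)
  fix s assume s: "s \<in> {0..t}"
  show "continuous (at s within {0..t}) (\<lambda>s. s^x * lg t j s)"
  proof (cases "s = 0")
    case True
    have "((\<lambda>s. s^x * lg t j s) \<longlongrightarrow> 0) (at 0 within {0..t})"
    proof (cases "t = 0")
      case True thus ?thesis by (simp add: at_within_def)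
    next
      case False
      hence "at (0::real) within {0..t} = at_right 0" using assms by (simp add: at_within_Icc_at_right)
      then show ?thesis using tendsto_pow_lg[OF assms(1)] by simp
    qed
    moreover obtain n where "x = Suc n" using assms by (cases x) auto
    ultimately show ?thesis using True by (simp add: continuous_within)
  next
    case False
    hence "s > 0" using s by auto
    hence "isCont (\<lambda>s. s^x * lg t j s) s"
      unfolding lg_def by (auto intro!: continuous_intros)
    thus ?thesis using continuous_at_imp_continuous_at_within by blast
  qed
qed

lemma mono_int:
  assumes "x \<ge> 1" "0 \<le> t"
  shows "((\<lambda>s. s^(x-1) * lg t j s) has_integral t^x / real x^(Suc j)) {0..t}"
proof (induction j)
  case 0
  have "((\<lambda>s. s^(x-1)) has_integral (t^x / real x - 0^x / real x)) {0..t}"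
  proof (rule fundamental_theorem_of_calculus_interior)
    show "continuous_on {0..t} (\<lambda>s. s^x / real x)" using assms by (intro continuous_intros) auto
    fix s assume "s \<in> {0<..<t}"
    have "((\<lambda>s. s^x / real x) has_real_derivative (real x * s^(x-1) / real x)) (at s)"
      by (auto intro!: derivative_eq_intros)
    thus "((\<lambda>s. s^x / real x) has_vector_derivative s^(x-1)) (at s)"
      using assms by (simp add: has_real_derivative_iff_has_vector_derivative)
  qed (use assms in auto)
  moreover have "(0::real)^x = 0" using assms by (cases x) auto
  ultimately show ?case by simp
next
  case (Suc j)
  define F where "F s = s^x * lg t (Suc j) s / real x" for s
  have xpos: "real x > 0" using assms by simp
  have "((\<lambda>s. s^(x-1) * lg t (Suc j) s - s^(x-1) * lg t j s / real x) has_integral (F t - F 0)) {0..t}"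
  proof (rule fundamental_theorem_of_calculus_interior)
    show "continuous_on {0..t} F" unfolding F_def
      by (intro continuous_intros cont_pow_lg assms) (use xpos in auto)
    fix s assume s: "s \<in> {0<..<t}"
    have sx: "s^x = s * s^(x-1)" using assms by (cases x) auto
    have "(F has_real_derivative ((real x * s^(x-1) * lg t (Suc j) s + s^x * (- lg t j s / s)) / real x)) (at s)"
      unfolding F_def using s assms by (auto intro!: derivative_eq_intros lg_deriv)
    moreover have "(real x * s^(x-1) * lg t (Suc j) s + s^x * (- lg t j s / s)) / real x
        = s^(x-1) * lg t (Suc j) s - s^(x-1) * lg t j s / real x"
      using s xpos by (simp add: sx field_simps)
    ultimately show "(F has_vector_derivative (s^(x-1) * lg t (Suc j) s - s^(x-1) * lg t j s / real x)) (at s)"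
      by (simp add: has_real_derivative_iff_has_vector_derivative)
  qed (use assms in auto)
  moreover have "F t = 0" "F 0 = 0" unfolding F_def using assms by (auto simp: lg_same)
  ultimately have A: "((\<lambda>s. s^(x-1) * lg t (Suc j) s - s^(x-1) * lg t j s / real x) has_integral 0) {0..t}"
    by simp
  have B: "((\<lambda>s. s^(x-1) * lg t j s / real x) has_integral (t^x / real x^(Suc j)) / real x) {0..t}"
    using has_integral_divide[OF Suc] by simp
  have "((\<lambda>s. (s^(x-1) * lg t (Suc j) s - s^(x-1) * lg t j s / real x) + s^(x-1) * lg t j s / real x)
     has_integral (0 + (t^x / real x^(Suc j)) / real x)) {0..t}"
    by (rule has_integral_add[OF A B])
  thus ?case by (simp add: field_simps)
qed



definition lst :: "nat list \<Rightarrow> nat" where "lst ns = (if ns = [] then 0 else last ns)"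
definition sg :: "nat list \<Rightarrow> real" where "sg ns = (if ns = [] then 1 else (-1)^last ns)"
definition xe :: "nat list \<Rightarrow> nat" where "xe ns = (if ns = [] then 0 else 2 * last ns - length ns)"
definition den :: "nat list \<Rightarrow> nat list \<Rightarrow> real" where
  "den ks ns = (\<Prod>j<length ks. (2 * real (ns ! j) - real (j + 1)) ^ (ks ! j))"
definition G :: "nat \<Rightarrow> nat list \<Rightarrow> real \<Rightarrow> real" where
  "G N ks t = (\<Sum>ns\<in>idx_set (length ks) N. sg ns * t ^ xe ns / den ks ns)"
definition Z :: "nat \<Rightarrow> nat list \<Rightarrow> real" where
  "Z N ks = (\<Sum>ns\<in>idx_set (length ks) N. 1 / den ks ns)"

lemma finite_idx_set: "finite (idx_set r N)"
proof -
  have "idx_set r N \<subseteq> {ns. set ns \<subseteq> {0..<N} \<and> length ns = r}"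
    unfolding idx_set_def by auto
  moreover have "finite {ns. set ns \<subseteq> {0..<N} \<and> length ns = r}"
    by (rule finite_lists_length_eq) simp
  ultimately show ?thesis by (rule finite_subset)
qed

lemma idx_set_0: "idx_set 0 N = {[]}"
  unfolding idx_set_def by auto

lemma idx_nth_ge:
  assumes "ns \<in> idx_set r N" "j < length ns"
  shows "ns ! j \<ge> j + 1"
  using assms
proof (induction j)
  case 0
  then show ?case unfolding idx_set_def by (auto simp: nth_mem Suc_le_eq)
next
  case (Suc j)
  hence "ns ! j < ns ! Suc j"
    unfolding idx_set_def by (auto simp: sorted_wrt_iff_nth_less)
  with Suc show ?case by simp
qed

lemma idx_set_length: "ns \<in> idx_set r N \<Longrightarrow> length ns = r"
  unfolding idx_set_def by simp

lemma lst_ge: "ns \<in> idx_set r N \<Longrightarrow> lst ns \<ge> r"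
proof -
  assume a: "ns \<in> idx_set r N"
  show ?thesis
  proof (cases "ns = []")
    case True thus ?thesis using a idx_set_length by (auto simp: lst_def)
  next
    case False
    hence "last ns = ns ! (length ns - 1)" by (simp add: last_conv_nth)
    moreover have "ns ! (length ns - 1) \<ge> length ns - 1 + 1"
      using idx_nth_ge[OF a, of "length ns - 1"] False by simp
    ultimately show ?thesis using False a idx_set_length by (auto simp: lst_def)
  qed
qed

lemma lst_less: "ns \<in> idx_set r N \<Longrightarrow> r > 0 \<Longrightarrow> lst ns < N"
  unfolding idx_set_def lst_def by auto

lemma snoc_in_idx:
  "ns @ [m] \<in> idx_set (Suc r) N \<longleftrightarrow> ns \<in> idx_set r N \<and> lst ns < m \<and> m < N"
proof
  assume a: "ns @ [m] \<in> idx_set (Suc r) N"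
  hence s: "sorted_wrt (<) ns" "\<forall>x\<in>set ns. x < m" "m > 0" "m < N"
    unfolding idx_set_def by (auto simp: sorted_wrt_append)
  have "lst ns < m" using s by (auto simp: lst_def)
  thus "ns \<in> idx_set r N \<and> lst ns < m \<and> m < N" using a s
    unfolding idx_set_def by (auto simp: sorted_wrt_append)
next
  assume a: "ns \<in> idx_set r N \<and> lst ns < m \<and> m < N"
  have "\<forall>x\<in>set ns. x \<le> lst ns"
  proof (cases "ns = []")
    case False
    have "sorted_wrt (<) ns" using a unfolding idx_set_def by simp
    moreover obtain ys l where "ns = ys @ [l]" using False by (metis rev_exhaust)
    ultimately show ?thesis by (auto simp: lst_def sorted_wrt_append less_imp_le)
  qed (simp)
  with a show "ns @ [m] \<in> idx_set (Suc r) N"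
    unfolding idx_set_def by (auto simp: sorted_wrt_append lst_def split: if_splits)
qed

lemma idx_set_Suc:
  "idx_set (Suc r) N = (\<lambda>(ns, m). ns @ [m]) ` (SIGMA ns:idx_set r N. {lst ns<..<N})"
proof (rule set_eqI)
  fix xs
  show "xs \<in> idx_set (Suc r) N \<longleftrightarrow> xs \<in> (\<lambda>(ns, m). ns @ [m]) ` (SIGMA ns:idx_set r N. {lst ns<..<N})"
  proof
    assume a: "xs \<in> idx_set (Suc r) N"
    hence "length xs = Suc r" by (simp add: idx_set_def)
    then obtain ns m where "xs = ns @ [m]" by (metis length_Suc_conv_rev append_Cons append.simps(1) rev_eq_Cons_iff)
    with a snoc_in_idx show "xs \<in> (\<lambda>(ns, m). ns @ [m]) ` (SIGMA ns:idx_set r N. {lst ns<..<N})"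
      by force
  next
    assume "xs \<in> (\<lambda>(ns, m). ns @ [m]) ` (SIGMA ns:idx_set r N. {lst ns<..<N})"
    thus "xs \<in> idx_set (Suc r) N" using snoc_in_idx by force
  qed
qed

lemma sum_idx_Suc:
  fixes f :: "nat list \<Rightarrow> real"
  shows "(\<Sum>ns\<in>idx_set (Suc r) N. f ns) = (\<Sum>ns\<in>idx_set r N. \<Sum>m\<in>{lst ns<..<N}. f (ns @ [m]))"
proof -
  have inj: "inj_on (\<lambda>(ns, m). ns @ [m]) (SIGMA ns:idx_set r N. {lst ns<..<N})"
    by (auto simp: inj_on_def)
  have "(\<Sum>ns\<in>idx_set (Suc r) N. f ns) = (\<Sum>(ns,m)\<in>(SIGMA ns:idx_set r N. {lst ns<..<N}). f (ns @ [m]))"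
    unfolding idx_set_Suc by (subst sum.reindex[OF inj]) (simp add: case_prod_beta comp_def)
  also have "\<dots> = (\<Sum>ns\<in>idx_set r N. \<Sum>m\<in>{lst ns<..<N}. f (ns @ [m]))"
    by (rule sum.Sigma[symmetric]) (auto simp: finite_idx_set)
  finally show ?thesis .
qed

lemma den_snoc:
  assumes "length ns = length ks"
  shows "den (ks @ [k]) (ns @ [m]) = den ks ns * (2 * real m - real (length ks + 1)) ^ k"
  unfolding den_def using assms by (simp add: nth_append)

lemma sg_snoc: "sg (ns @ [m]) = (-1)^m" by (simp add: sg_def)
lemma xe_snoc: "xe (ns @ [m]) = 2 * m - Suc (length ns)" by (simp add: xe_def)

lemma den_ge_1:
  assumes "ns \<in> idx_set (length ks) N"
  shows "den ks ns \<ge> 1"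
  unfolding den_def
proof (rule prod_ge_1, intro ballI one_le_power)
  fix j assume "j \<in> {..<length ks}"
  hence "ns ! j \<ge> j + 1" using idx_nth_ge[OF assms] idx_set_length[OF assms] by simp
  thus "1 \<le> 2 * real (ns ! j) - real (j + 1)" by linarith
qed



lemma geom_alt:
  fixes s :: real
  assumes "a < N" "r0 \<le> 2 * a"
  shows "(1 + s^2) * (\<Sum>m\<in>{a<..<N}. (-1)^m * s^(2*m - r0 - 2))
         = (-1)^(a+1) * s^(2*a - r0) - (-1)^N * s^(2*N - r0 - 2)"
proof -
  obtain d where N: "N = Suc a + d" using less_imp_Suc_add[OF assms(1)] by auto
  have "(1 + s^2) * (\<Sum>m\<in>{a<..<Suc a + d}. (-1)^m * s^(2*m - r0 - 2))
         = (-1)^(a+1) * s^(2*a - r0) - (-1)^(Suc a + d) * s^(2*(Suc a + d) - r0 - 2)"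
  proof (induction d)
  case 0
  have x: "2 * (Suc a + 0) - r0 - 2 = 2 * a - r0" using assms by simp
  have e: "{a<..<Suc a + 0} = {}" by auto
  show ?case unfolding x e by simp
next
  case (Suc d)
  define N where "N = Suc a + d"
  have Suc': "(1 + s^2) * (\<Sum>m\<in>{a<..<N}. (-1)^m * s^(2*m - r0 - 2))
         = (-1)^(a+1) * s^(2*a - r0) - (-1)^N * s^(2*N - r0 - 2)" using Suc.IH unfolding N_def .
  have NN: "Suc a + Suc d = Suc N" by (simp add: N_def)
  have e: "{a<..<Suc N} = insert N {a<..<N}" using N_def by auto
  have x: "2 * Suc N - r0 - 2 = (2 * N - r0 - 2) + 2" using N_def assms by simp
  have "(1 + s^2) * (\<Sum>m\<in>{a<..<Suc N}. (-1)^m * s^(2*m - r0 - 2))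
      = (1 + s^2) * ((-1)^N * s^(2*N - r0 - 2)) + (1 + s^2) * (\<Sum>m\<in>{a<..<N}. (-1)^m * s^(2*m - r0 - 2))"
    unfolding e by (simp add: distrib_left)
  also have "\<dots> = (1 + s^2) * ((-1)^N * s^(2*N - r0 - 2)) + ((-1)^(a+1) * s^(2*a - r0) - (-1)^N * s^(2*N - r0 - 2))"
    using Suc' by simp
  also have "\<dots> = (-1)^(a+1) * s^(2*a - r0) - (-1)^(Suc N) * s^(2*Suc N - r0 - 2)"
    unfolding x by (simp add: power_add algebra_simps power2_eq_square)
  finally show ?case unfolding NN .
qed
  thus ?thesis using N by simp
qed


lemma G_snoc_integral:
  assumes "k \<ge> 1" "N \<ge> 1" "0 \<le> t"
  shows "((\<lambda>s. lg t (k-1) s * (- (G N ks0 s + (-1)^N * s^(2*N - length ks0 - 2) * Z N ks0) / (1 + s^2)))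
          has_integral G N (ks0 @ [k]) t) {0..t}"
proof -
  define r0 where "r0 = length ks0"
  let ?R = "\<lambda>ns. {lst ns<..<N}"
  have G1: "G N (ks0 @ [k]) t = (\<Sum>ns\<in>idx_set r0 N. \<Sum>m\<in>?R ns.
              (-1)^m / den ks0 ns * (t^(2*m - Suc r0) / real (2*m - Suc r0) ^ k))"
    unfolding G_def r0_def[symmetric] length_append_singleton sum_idx_Suc
  proof (intro sum.cong refl)
    fix ns m assume ns: "ns \<in> idx_set r0 N" and m: "m \<in> ?R ns"
    have len: "length ns = length ks0" using idx_set_length[OF ns] r0_def by simp
    have "lst ns \<ge> r0" using lst_ge[OF ns] .
    hence mr: "m \<ge> r0 + 1" using m by auto
    hence "real (2*m - Suc r0) = 2 * real m - real (r0 + 1)" by (simp add: of_nat_diff)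
    thus "sg (ns @ [m]) * t ^ xe (ns @ [m]) / den (ks0 @ [k]) (ns @ [m]) =
         (-1)^m / den ks0 ns * (t^(2*m - Suc r0) / real (2*m - Suc r0) ^ k)"
      by (simp add: sg_snoc xe_snoc den_snoc len r0_def[symmetric])
  qed
  have int1: "((\<lambda>s. \<Sum>ns\<in>idx_set r0 N. \<Sum>m\<in>?R ns. (-1)^m / den ks0 ns * (s^(2*m - Suc r0 - 1) * lg t (k-1) s))
          has_integral G N (ks0 @ [k]) t) {0..t}"
    unfolding G1
  proof (intro has_integral_sum finite_idx_set finite_greaterThanLessThan has_integral_mult_right)
    fix ns m assume ns: "ns \<in> idx_set r0 N" and m: "m \<in> ?R ns"
    have "lst ns \<ge> r0" using lst_ge[OF ns] .
    hence mr: "m \<ge> r0 + 1" using m by auto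
    have "((\<lambda>s. s^(2*m - Suc r0 - 1) * lg t (Suc (k-1) - 1) s) has_integral
           t^(2*m - Suc r0) / real (2*m - Suc r0) ^ Suc (k-1)) {0..t}"
      using mono_int[of "2*m - Suc r0" t "k-1"] mr assms by simp
    thus "((\<lambda>s. s^(2*m - Suc r0 - 1) * lg t (k-1) s) has_integral
           t^(2*m - Suc r0) / real (2*m - Suc r0) ^ k) {0..t}"
      using assms by simp
  qed
  show ?thesis
  proof (rule has_integral_eq[OF _ int1])
    fix s :: real
    have "(\<Sum>ns\<in>idx_set r0 N. \<Sum>m\<in>?R ns. (-1)^m / den ks0 ns * (s^(2*m - Suc r0 - 1) * lg t (k-1) s))
        = (\<Sum>ns\<in>idx_set r0 N. lg t (k-1) s / den ks0 ns * (\<Sum>m\<in>?R ns. (-1)^m * s^(2*m - r0 - 2)))"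
      by (intro sum.cong refl) (simp add: sum_distrib_left mult_ac)
    also have "\<dots> = (\<Sum>ns\<in>idx_set r0 N. lg t (k-1) s / den ks0 ns *
                 ((- (sg ns * s ^ xe ns) - (-1)^N * s^(2*N - r0 - 2)) / (1 + s^2)))"
    proof (intro sum.cong refl arg_cong2[where f = "(*)"])
      fix ns assume ns: "ns \<in> idx_set r0 N"
      have a1: "lst ns < N"
      proof (cases "r0 = 0")
        case True thus ?thesis using assms ns by (simp add: idx_set_0 lst_def)
      next
        case False thus ?thesis using lst_less[OF ns] by simp
      qed
      have a2: "r0 \<le> 2 * lst ns" using lst_ge[OF ns] by simp
      have pos: "1 + s^2 \<noteq> 0" using add_pos_nonneg[OF zero_less_one zero_le_power2[of s]] by linarith
      have e: "(-1)^(lst ns + 1) * s^(2 * lst ns - r0) = - (sg ns * s ^ xe ns)"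
        using idx_set_length[OF ns] ns by (auto simp: sg_def xe_def lst_def idx_set_0)
      have h: "(1 + s^2) * (\<Sum>m\<in>?R ns. (-1)^m * s^(2*m - r0 - 2)) = - (sg ns * s ^ xe ns) - (-1)^N * s^(2*N - r0 - 2)"
        using geom_alt[OF a1 a2, of s] unfolding e .
      show "(\<Sum>m\<in>?R ns. (-1)^m * s^(2*m - r0 - 2)) = (- (sg ns * s ^ xe ns) - (-1)^N * s^(2*N - r0 - 2)) / (1 + s^2)"
        unfolding h[symmetric] using pos by simp
    qed
    also have "\<dots> = (\<Sum>ns\<in>idx_set r0 N. lg t (k-1) s / (1 + s^2) *
                 (- (sg ns * s ^ xe ns / den ks0 ns) - (-1)^N * s^(2*N - r0 - 2) * (1 / den ks0 ns)))"
    proof (intro sum.cong refl)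
      fix ns assume ns: "ns \<in> idx_set r0 N"
      have "den ks0 ns \<ge> 1" using den_ge_1[of ns ks0 N] ns r0_def by simp
      hence "den ks0 ns \<noteq> 0" by simp
      thus "lg t (k-1) s / den ks0 ns * ((- (sg ns * s ^ xe ns) - (-1)^N * s^(2*N - r0 - 2)) / (1 + s^2))
          = lg t (k-1) s / (1 + s^2) * (- (sg ns * s ^ xe ns / den ks0 ns) - (-1)^N * s^(2*N - r0 - 2) * (1 / den ks0 ns))"
        by (simp add: divide_simps)
    qed
    also have "\<dots> = lg t (k-1) s / (1 + s^2) * (- G N ks0 s - (-1)^N * s^(2*N - r0 - 2) * Z N ks0)"
      unfolding G_def Z_def r0_def[symmetric] sum_distrib_left[symmetric]
      by (simp add: sum_subtractf sum_negf sum_distrib_left)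
    also have "\<dots> = lg t (k-1) s * (- (G N ks0 s + (-1)^N * s^(2*N - length ks0 - 2) * Z N ks0) / (1 + s^2))"
      unfolding r0_def by (simp add: divide_inverse algebra_simps)
    finally show "(\<Sum>ns\<in>idx_set r0 N. \<Sum>m\<in>?R ns. (-1)^m / den ks0 ns * (s^(2*m - Suc r0 - 1) * lg t (k-1) s))
       = lg t (k-1) s * (- (G N ks0 s + (-1)^N * s^(2*N - length ks0 - 2) * Z N ks0) / (1 + s^2))" .
  qed
qed



lemma kernel_bound:
  fixes K \<phi> :: "real \<Rightarrow> real"
  assumes t: "0 \<le> t" and K: "(K has_integral I) {0..t}"
    and Kpos: "\<And>s. s \<in> {0<..t} \<Longrightarrow> 0 \<le> K s"
    and phic: "continuous_on {0..t} \<phi>" and phib: "\<And>s. s \<in> {0..t} \<Longrightarrow> \<bar>\<phi> s\<bar> \<le> B"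
  shows "(\<lambda>s. K s * \<phi> s) integrable_on {0..t}" "\<bar>integral {0..t} (\<lambda>s. K s * \<phi> s)\<bar> \<le> B * I"
proof -
  define K' where "K' s = (if s = 0 then 0 else K s)" for s
  have K': "(K' has_integral I) {0..t}"
    by (rule has_integral_spike[of "{0}", OF _ _ K]) (auto simp: K'_def)
  have K'pos: "0 \<le> K' s" if "s \<in> {0..t}" for s using that Kpos by (auto simp: K'_def)
  have K'a: "K' absolutely_integrable_on {0..t}"
    by (rule nonnegative_absolutely_integrable_1) (use K' K'pos in \<open>auto simp: has_integral_integrable\<close>)
  have meas: "\<phi> \<in> borel_measurable (lebesgue_on {0..t})"
    by (rule continuous_imp_measurable_on_sets_lebesgue[OF phic]) simp
  have bdd: "bounded (\<phi> ` {0..t})"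
    by (rule compact_imp_bounded, rule compact_continuous_image[OF phic]) simp
  have P: "(\<lambda>s. \<phi> s * K' s) absolutely_integrable_on {0..t}"
    by (rule absolutely_integrable_bounded_measurable_product_real[OF meas _ bdd K'a]) simp
  hence P': "(\<lambda>s. K' s * \<phi> s) integrable_on {0..t}"
    by (simp add: mult.commute set_lebesgue_integral_eq_integral(1))
  have eq: "\<And>s. s \<in> {0..t} - {0} \<Longrightarrow> K' s * \<phi> s = K s * \<phi> s" by (auto simp: K'_def)
  show "(\<lambda>s. K s * \<phi> s) integrable_on {0..t}"
    by (rule integrable_spike[OF P', of "{0}"]) (auto simp: K'_def)
  have "integral {0..t} (\<lambda>s. K s * \<phi> s) = integral {0..t} (\<lambda>s. K' s * \<phi> s)"
    by (rule integral_spike[of "{0}"]) (use eq in auto)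
  also have "\<bar>\<dots>\<bar> \<le> integral {0..t} (\<lambda>s. B * K' s)"
  proof -
    have i2: "(\<lambda>s. B * K' s) integrable_on {0..t}"
      using has_integral_mult_right[OF K'] by (auto simp: has_integral_integrable)
    have pw: "norm (K' s * \<phi> s) \<le> B * K' s" if s: "s \<in> {0..t}" for s
    proof -
      have "\<bar>K' s * \<phi> s\<bar> = K' s * \<bar>\<phi> s\<bar>" using K'pos[OF s] by (simp add: abs_mult)
      also have "\<dots> \<le> K' s * B" using K'pos[OF s] phib[OF s] by (intro mult_left_mono) auto
      finally show ?thesis by (simp add: mult.commute)
    qed
    show ?thesis using integral_norm_bound_integral[OF P' i2 pw] by simp
  qed
  also have "\<dots> = B * I"
    using has_integral_mult_right[OF K', of B] by (rule integral_unique)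
  finally show "\<bar>integral {0..t} (\<lambda>s. K s * \<phi> s)\<bar> \<le> B * I" .
qed

definition Hs :: "nat \<Rightarrow> real" where "Hs N = (\<Sum>m\<in>{0<..<N}. 1 / real m)"

lemma Hs_nonneg: "Hs N \<ge> 0" unfolding Hs_def by (intro sum_nonneg) auto

lemma Hs_le: "N \<ge> 1 \<Longrightarrow> Hs N \<le> 1 + ln (real N)"
proof -
  assume N: "N \<ge> 1"
  have "Hs N = harm (N - 1)"
  proof -
    have "{0<..<N} = {1..N-1}" using N by auto
    thus ?thesis unfolding Hs_def harm_def by (simp add: inverse_eq_divide)
  qed
  also have "\<dots> \<le> 1 + ln (real N)"
  proof (cases "N = 1")
    case True thus ?thesis by (simp add: harm_def)
  next
    case False
    hence "harm (N - 1) - ln (real (N - 1)) \<le> harm 1 - ln (real (1::nat))"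
      using N by (intro euler_mascheroni_sequence_decreasing) auto
    hence "harm (N - 1) \<le> 1 + ln (real (N - 1))" by (simp add: harm_def)
    also have "ln (real (N - 1)) \<le> ln (real N)" using False N by (subst ln_le_cancel_iff) auto
    finally show ?thesis by simp
  qed
  finally show ?thesis .
qed

lemma Z_Nil: "Z N [] = 1" by (simp add: Z_def idx_set_0 den_def)
lemma G_Nil: "G N [] t = 1" by (simp add: G_def idx_set_0 den_def sg_def xe_def)

lemma Z_nonneg: "Z N ks \<ge> 0"
  unfolding Z_def by (intro sum_nonneg) (use den_ge_1 in \<open>fastforce\<close>)

lemma Z_bound:
  assumes "\<forall>k\<in>set ks. k \<ge> 1"
  shows "Z N ks \<le> Hs N ^ length ks"
  using assms
proof (induction ks rule: rev_induct)
  case Nil thus ?case by (simp add: Z_Nil)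
next
  case (snoc k ks0)
  define r0 where "r0 = length ks0"
  have k: "k \<ge> 1" using snoc by simp
  have "Z N (ks0 @ [k]) = (\<Sum>ns\<in>idx_set r0 N. \<Sum>m\<in>{lst ns<..<N}. 1 / (den ks0 ns * (2 * real m - real (r0 + 1)) ^ k))"
    unfolding Z_def r0_def length_append_singleton sum_idx_Suc
    by (intro sum.cong refl) (simp add: den_snoc idx_set_length)
  also have "\<dots> \<le> (\<Sum>ns\<in>idx_set r0 N. (1 / den ks0 ns) * Hs N)"
  proof (intro sum_mono)
    fix ns assume ns: "ns \<in> idx_set r0 N"
    have d1: "den ks0 ns \<ge> 1" using den_ge_1[of ns ks0 N] ns r0_def by simp
    have "(\<Sum>m\<in>{lst ns<..<N}. 1 / (den ks0 ns * (2 * real m - real (r0 + 1)) ^ k))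
        \<le> (\<Sum>m\<in>{lst ns<..<N}. (1 / den ks0 ns) * (1 / real m))"
    proof (intro sum_mono)
      fix m assume m: "m \<in> {lst ns<..<N}"
      have "m \<ge> r0 + 1" using lst_ge[OF ns] m by auto
      hence b: "2 * real m - real (r0 + 1) \<ge> real m" "real m \<ge> 1" by auto
      hence "(2 * real m - real (r0 + 1)) ^ k \<ge> 2 * real m - real (r0 + 1)"
        using k by (intro self_le_power) auto
      hence "(2 * real m - real (r0 + 1)) ^ k \<ge> real m" using b by linarith
      hence "den ks0 ns * (2 * real m - real (r0 + 1)) ^ k \<ge> den ks0 ns * real m"
        using d1 by (intro mult_left_mono) auto
      moreover have "den ks0 ns * real m > 0" using d1 b by simp
      ultimately show "1 / (den ks0 ns * (2 * real m - real (r0 + 1)) ^ k) \<le> (1 / den ks0 ns) * (1 / real m)"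
        by (simp add: frac_le)
    qed
    also have "\<dots> = (1 / den ks0 ns) * (\<Sum>m\<in>{lst ns<..<N}. 1 / real m)"
      by (simp add: sum_distrib_left)
    also have "\<dots> \<le> (1 / den ks0 ns) * Hs N"
    proof (intro mult_left_mono)
      show "(\<Sum>m\<in>{lst ns<..<N}. 1 / real m) \<le> Hs N"
        unfolding Hs_def by (intro sum_mono2) auto
    qed (use d1 in simp)
    finally show "(\<Sum>m\<in>{lst ns<..<N}. 1 / (den ks0 ns * (2 * real m - real (r0 + 1)) ^ k))
        \<le> (1 / den ks0 ns) * Hs N" .
  qed
  also have "\<dots> = Z N ks0 * Hs N"
    unfolding Z_def r0_def by (simp add: sum_distrib_right)
  also have "\<dots> \<le> Hs N ^ length ks0 * Hs N"
    using snoc Hs_nonneg by (intro mult_right_mono) auto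
  finally show ?case by (simp add: mult.commute)
qed

lemma err_lim:
  assumes "\<forall>k\<in>set ks. k \<ge> 1"
  shows "(\<lambda>N. Z N ks / real (2 * N - length ks - 1)) \<longlonglongrightarrow> 0"
proof -
  define p where "p = length ks"
  have lim: "(\<lambda>N::nat. (1 + ln (real N))^p / (2 * real N - real p - 1)) \<longlonglongrightarrow> 0"
    by real_asymp
  show ?thesis
  proof (rule Lim_null_comparison[OF _ lim])
    show "\<forall>\<^sub>F N in sequentially. norm (Z N ks / real (2 * N - length ks - 1))
               \<le> (1 + ln (real N))^p / (2 * real N - real p - 1)"
    proof (rule eventually_sequentiallyI[of "p + 1"])
      fix N assume N: "N \<ge> p + 1"
      have x: "real (2 * N - length ks - 1) = 2 * real N - real p - 1" using N p_def by (simp add: of_nat_diff)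
      have pos: "2 * real N - real p - 1 > 0" using N by simp
      have "Z N ks \<le> Hs N ^ p" using Z_bound[OF assms] p_def by simp
      also have "\<dots> \<le> (1 + ln (real N))^p" using Hs_le[of N] N Hs_nonneg by (intro power_mono) auto
      finally have "Z N ks \<le> (1 + ln (real N))^p" .
      thus "norm (Z N ks / real (2 * N - length ks - 1)) \<le> (1 + ln (real N))^p / (2 * real N - real p - 1)"
        unfolding x using pos Z_nonneg[of N ks] by (simp add: divide_right_mono)
    qed
  qed
qed



fun Glr :: "nat list \<Rightarrow> real \<Rightarrow> real" where
  "Glr [] t = 1"
| "Glr (k # ks) t = integral {0..t} (\<lambda>s. lg t (k - 1) s * (- Glr ks s / (1 + s^2)))"

definition Gl :: "nat list \<Rightarrow> real \<Rightarrow> real" where "Gl ks = Glr (rev ks)"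

lemma Gl_Nil: "Gl [] t = 1" by (simp add: Gl_def)
lemma Gl_snoc: "Gl (ks @ [k]) t = integral {0..t} (\<lambda>s. lg t (k - 1) s * (- Gl ks s / (1 + s^2)))"
  by (simp add: Gl_def)

lemma G_cont: "continuous_on A (G N ks)"
  unfolding G_def by (intro continuous_on_sum continuous_intros) (use den_ge_1 in force)

lemma q_pos: "1 + (s::real)^2 > 0"
  using add_pos_nonneg[OF zero_less_one zero_le_power2[of s]] by simp

lemma lg_kernel: "0 \<le> t \<Longrightarrow> (lg t j has_integral t) {0..t}"
  using mono_int[of 1 t j] by simp

lemma alg_eq:
  fixes a g h c w z q :: real
  shows "a * (- (g + c * w * z) / q) = a * (- (g - h) / q) + a * (- h / q) + (w * a) * (- (c * z) / q)"
  by (simp add: divide_inverse algebra_simps)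

theorem Gconv:
  assumes "\<forall>k\<in>set ks. k \<ge> 1"
  shows "uniform_limit {0..1} (\<lambda>N. G N ks) (Gl ks) sequentially"
  using assms
proof (induction ks rule: rev_induct)
  case Nil
  show ?case unfolding uniform_limit_sequentially_iff by (simp add: G_Nil Gl_Nil)
next
  case (snoc k ks0)
  have k: "k \<ge> 1" and ks0: "\<forall>k\<in>set ks0. k \<ge> 1" using snoc.prems by auto
  have ul0: "uniform_limit {0..1} (\<lambda>N. G N ks0) (Gl ks0) sequentially" using snoc.IH ks0 by simp
  have c0: "continuous_on {0..1} (Gl ks0)"
    by (rule uniform_limit_theorem[OF _ ul0]) (auto simp: G_cont)
  define r0 where "r0 = length ks0"
  show ?case unfolding uniform_limit_sequentially_iff
  proof (intro allI impI)
    fix e :: real assume e: "e > 0"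
    obtain M1 where M1: "\<forall>N\<ge>M1. \<forall>s\<in>{0..1}. dist (G N ks0 s) (Gl ks0 s) < e/2"
      using ul0 e unfolding uniform_limit_sequentially_iff by (meson half_gt_zero)
    obtain M2 where M2: "\<forall>N\<ge>M2. norm (Z N ks0 / real (2 * N - r0 - 1) - 0) < e/2"
      using err_lim[OF ks0] e unfolding LIMSEQ_iff r0_def by (meson half_gt_zero)
    show "\<exists>M. \<forall>N\<ge>M. \<forall>t\<in>{0..1}. dist (G N (ks0 @ [k]) t) (Gl (ks0 @ [k]) t) < e"
    proof (intro exI allI impI ballI)
      fix N t assume N: "max (max M1 M2) (r0 + 2) \<le> N" and t: "t \<in> {0..(1::real)}"
      define x where "x = 2 * N - r0 - 1"
      have x1: "x \<ge> 1" unfolding x_def using N by linarith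
      have xm1: "x - 1 = 2 * N - length ks0 - 2" using x_def r0_def by simp
      have t0: "0 \<le> t" and t1: "t \<le> 1" using t by auto
      have sub: "{0..t} \<subseteq> {0..1}" using t1 by auto
      define \<phi>1 where "\<phi>1 s = - (G N ks0 s - Gl ks0 s) / (1 + s^2)" for s
      define \<phi>2 where "\<phi>2 s = - Gl ks0 s / (1 + s^2)" for s
      define \<phi>3 where "\<phi>3 s = - ((-1)^N * Z N ks0) / (1 + s^2)" for s
      define K3 where "K3 s = s^(x - 1) * lg t (k - 1) s" for s
      have K1i: "(lg t (k - 1) has_integral t) {0..t}" by (rule lg_kernel[OF t0])
      have K3i: "(K3 has_integral t^x / real x ^ k) {0..t}"
        using mono_int[OF x1 t0, of "k - 1"] k unfolding K3_def by simp
      have K1p: "\<And>s. s \<in> {0<..t} \<Longrightarrow> 0 \<le> lg t (k - 1) s" using lg_nonneg by auto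
      have K3p: "\<And>s. s \<in> {0<..t} \<Longrightarrow> 0 \<le> K3 s" unfolding K3_def using lg_nonneg by auto
      have c0t: "continuous_on {0..t} (Gl ks0)" using continuous_on_subset[OF c0 sub] .
      have cG: "continuous_on {0..t} (G N ks0)" by (rule G_cont)
      have qnz: "\<And>s. 1 + s^2 \<noteq> (0::real)" using q_pos by (metis less_irrefl)
      have c1: "continuous_on {0..t} \<phi>1" unfolding \<phi>1_def
        by (intro continuous_intros c0t cG) (use qnz in auto)
      have c2: "continuous_on {0..t} \<phi>2" unfolding \<phi>2_def
        by (intro continuous_intros c0t) (use qnz in auto)
      have c3: "continuous_on {0..t} \<phi>3" unfolding \<phi>3_def
        by (intro continuous_intros) (use qnz in auto)
      have b1: "\<bar>\<phi>1 s\<bar> \<le> e/2" if s: "s \<in> {0..t}" for s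
      proof -
        have "\<bar>G N ks0 s - Gl ks0 s\<bar> \<le> e/2" using M1 N s sub by (force simp: dist_real_def)
        moreover have "\<bar>G N ks0 s - Gl ks0 s\<bar> / (1 + s^2) \<le> \<bar>G N ks0 s - Gl ks0 s\<bar> / 1"
          by (rule divide_left_mono) (auto simp: q_pos)
        ultimately have "\<bar>G N ks0 s - Gl ks0 s\<bar> / (1 + s^2) \<le> e/2" by (metis div_by_1 order_trans)
        thus ?thesis unfolding \<phi>1_def using q_pos[of s] by (simp add: abs_divide abs_minus_commute)
      qed
      have b3: "\<bar>\<phi>3 s\<bar> \<le> Z N ks0" if s: "s \<in> {0..t}" for s
      proof -
        have "\<bar>\<phi>3 s\<bar> = Z N ks0 / (1 + s^2)"
          unfolding \<phi>3_def using q_pos[of s] Z_nonneg[of N ks0] by (simp add: abs_divide abs_mult)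
        also have "\<dots> \<le> Z N ks0 / 1" using Z_nonneg[of N ks0] by (intro divide_left_mono) (auto simp: q_pos)
        finally show ?thesis by simp
      qed
      note kb1 = kernel_bound[OF t0 K1i K1p c1 b1]
      note kb3 = kernel_bound[OF t0 K3i K3p c3 b3]
      have "bounded (\<phi>2 ` {0..t})" by (rule compact_imp_bounded, rule compact_continuous_image[OF c2]) simp
      then obtain B2 where B2: "\<forall>y\<in>\<phi>2 ` {0..t}. norm y \<le> B2" by (auto simp: bounded_iff)
      have i2: "(\<lambda>s. lg t (k - 1) s * \<phi>2 s) integrable_on {0..t}"
        by (rule kernel_bound(1)[OF t0 K1i K1p c2, of B2]) (use B2 in auto)
      have eqf: "lg t (k-1) s * (- (G N ks0 s + (-1)^N * s^(2*N - length ks0 - 2) * Z N ks0) / (1 + s^2))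
               = lg t (k - 1) s * \<phi>1 s + lg t (k - 1) s * \<phi>2 s + K3 s * \<phi>3 s" for s
        unfolding \<phi>1_def \<phi>2_def \<phi>3_def K3_def xm1 by (rule alg_eq)
      have GI: "((\<lambda>s. lg t (k - 1) s * \<phi>1 s + lg t (k - 1) s * \<phi>2 s + K3 s * \<phi>3 s)
              has_integral G N (ks0 @ [k]) t) {0..t}"
        using G_snoc_integral[OF k _ t0, of N ks0] N unfolding eqf by simp
      have GI2: "((\<lambda>s. lg t (k - 1) s * \<phi>1 s + lg t (k - 1) s * \<phi>2 s + K3 s * \<phi>3 s)
              has_integral (integral {0..t} (\<lambda>s. lg t (k - 1) s * \<phi>1 s) + integral {0..t} (\<lambda>s. lg t (k - 1) s * \<phi>2 s)
                + integral {0..t} (\<lambda>s. K3 s * \<phi>3 s))) {0..t}"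
        by (intro has_integral_add integrable_integral kb1(1) kb3(1) i2)
      have Geq: "G N (ks0 @ [k]) t = integral {0..t} (\<lambda>s. lg t (k - 1) s * \<phi>1 s) + Gl (ks0 @ [k]) t
                + integral {0..t} (\<lambda>s. K3 s * \<phi>3 s)"
        using has_integral_unique[OF GI GI2] unfolding Gl_snoc \<phi>2_def by simp
      have tx: "t^x / real x ^ k \<le> 1 / real x"
      proof -
        have "t^x \<le> 1" using t0 t1 by (simp add: power_le_one)
        moreover have "real x ^ k \<ge> real x" using x1 k by (intro self_le_power) auto
        ultimately show ?thesis using x1 t0 by (intro frac_le) auto
      qed
      have e3: "Z N ks0 * (t^x / real x ^ k) \<le> Z N ks0 / real x"
        using mult_left_mono[OF tx Z_nonneg[of N ks0]] by simp
      have "M2 \<le> N" using N by simp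
      hence "norm (Z N ks0 / real (2 * N - r0 - 1) - 0) < e/2" by (rule M2[rule_format])
      hence e3': "Z N ks0 / real x < e/2" unfolding x_def using Z_nonneg[of N ks0] by simp
      have "\<bar>G N (ks0 @ [k]) t - Gl (ks0 @ [k]) t\<bar>
          \<le> \<bar>integral {0..t} (\<lambda>s. lg t (k - 1) s * \<phi>1 s)\<bar> + \<bar>integral {0..t} (\<lambda>s. K3 s * \<phi>3 s)\<bar>"
        unfolding Geq by linarith
      also have "\<dots> \<le> e/2 * t + Z N ks0 * (t^x / real x ^ k)" using kb1(2) kb3(2) by linarith
      also have "\<dots> < e"
      proof -
        have "e/2 * t \<le> e/2" using t1 e by (simp add: mult_left_le)
        thus ?thesis using e3 e3' by linarith
      qed
      finally show "dist (G N (ks0 @ [k]) t) (Gl (ks0 @ [k]) t) < e" by (simp add: dist_real_def)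
    qed
  qed
qed



lemma indef_deriv:
  fixes F :: "real \<Rightarrow> real"
  assumes "F integrable_on {a..b}" "u \<in> {a<..<b}" "isCont F u"
  shows "((\<lambda>x. integral {a..x} F) has_real_derivative F u) (at u)"
proof -
  have "((\<lambda>x. integral {a..x} F) has_vector_derivative F u) (at u within ({a..b} - {}))"
    using assms by (intro integral_has_vector_derivative_continuous_at)
       (auto intro: continuous_at_imp_continuous_at_within)
  moreover have "at u within {a..b} = at u" using assms(2) by (intro at_within_interior) auto
  ultimately show ?thesis by (simp add: has_real_derivative_iff_has_vector_derivative)
qed

lemma Tbar_eq:
  assumes "ks \<noteq> []" "\<forall>k\<in>set ks. k \<ge> 1"
  shows "Tbar ks = 2 ^ length ks * Gl ks 1"
proof -
  have "(\<lambda>N. G N ks 1) \<longlonglongrightarrow> Gl ks 1"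
    using tendsto_uniform_limitI[OF Gconv[OF assms(2)], of 1] by simp
  moreover have "G N ks 1 = (\<Sum>ns\<in>idx_set (length ks) N. Tbar_term ks ns)" for N
    unfolding G_def Tbar_term_def
  proof (intro sum.cong refl)
    fix ns assume "ns \<in> idx_set (length ks) N"
    hence "ns \<noteq> []" using idx_set_length assms(1) by fastforce
    thus "sg ns * 1 ^ xe ns / den ks ns =
          (- 1) ^ last ns / (\<Prod>j<length ks. (2 * real (ns ! j) - real (j + 1)) ^ ks ! j)"
      by (simp add: sg_def den_def)
  qed
  ultimately have "(\<lambda>N. \<Sum>ns\<in>idx_set (length ks) N. Tbar_term ks ns) \<longlonglongrightarrow> Gl ks 1" by simp
  hence "lim (\<lambda>N. \<Sum>ns\<in>idx_set (length ks) N. Tbar_term ks ns) = Gl ks 1" by (rule limI)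
  thus ?thesis unfolding Tbar_def by simp
qed

lemma Gl_rep:
  assumes "t \<in> {0..1}"
  shows "Gl (replicate m 1) t = (- arctan t)^m / fact m"
  using assms
proof (induction m arbitrary: t)
  case 0 thus ?case by (simp add: Gl_Nil)
next
  case (Suc m)
  have r: "replicate (Suc m) (1::nat) = replicate m 1 @ [1]" by (simp add: replicate_append_same)
  have "Gl (replicate (Suc m) 1) t = integral {0..t} (\<lambda>s. - ((- arctan s)^m / fact m) / (1 + s^2))"
    unfolding r Gl_snoc
  proof (intro integral_cong)
    fix s assume "s \<in> {0..t}"
    hence "s \<in> {0..1}" using Suc.prems by auto
    from Suc.IH[OF this] show "lg t (1 - 1) s * (- Gl (replicate m 1) s / (1 + s^2)) = - ((- arctan s)^m / fact m) / (1 + s^2)"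
      by simp
  qed
  also have "\<dots> = (- arctan t)^(Suc m) / fact (Suc m) - (- arctan 0)^(Suc m) / fact (Suc m)"
  proof (rule integral_unique, rule fundamental_theorem_of_calculus)
    show "0 \<le> t" using Suc.prems by simp
    fix s assume s: "s \<in> {0..t}"
    have d1: "((\<lambda>s. - arctan s) has_real_derivative (- (1 / (1 + s^2)))) (at s)"
      using DERIV_arctan[of s] by (auto intro!: derivative_eq_intros simp: inverse_eq_divide)
    have d2: "((\<lambda>x. x^(Suc m)) has_real_derivative (real (Suc m) * (- arctan s)^m)) (at (- arctan s))"
      using DERIV_pow[of "Suc m" "- arctan s"] by simp
    have d: "((\<lambda>s. (- arctan s)^(Suc m) / fact (Suc m)) has_real_derivative
          (real (Suc m) * (- arctan s)^m * (- (1 / (1 + s^2))) / fact (Suc m))) (at s)"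
      by (rule DERIV_cdivide, rule DERIV_chain2[OF d2 d1])
    have eq: "real (Suc m) * (- arctan s)^m * (- (1 / (1 + s^2))) / fact (Suc m)
        = - ((- arctan s)^m / fact m) / (1 + s^2)"
      by (simp add: fact_Suc divide_simps)
    show "((\<lambda>s. (- arctan s)^(Suc m) / fact (Suc m)) has_vector_derivative
          (- ((- arctan s)^m / fact m) / (1 + s^2))) (at s within {0..t})"
      using d[unfolded eq, unfolded has_real_derivative_iff_has_vector_derivative]
      by (rule has_vector_derivative_at_within)
  qed
  finally show ?case by simp
qed



lemma kernel_int:
  fixes K \<phi> :: "real \<Rightarrow> real"
  assumes t: "0 \<le> t" and K: "(K has_integral I) {0..t}"
    and Kpos: "\<And>s. s \<in> {0<..t} \<Longrightarrow> 0 \<le> K s" and phic: "continuous_on {0..t} \<phi>"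
  shows "(\<lambda>s. K s * \<phi> s) integrable_on {0..t}"
proof -
  have "bounded (\<phi> ` {0..t})" by (rule compact_imp_bounded, rule compact_continuous_image[OF phic]) simp
  then obtain B where B: "\<forall>y\<in>\<phi> ` {0..t}. norm y \<le> B" by (auto simp: bounded_iff)
  show ?thesis by (rule kernel_bound(1)[OF t K Kpos phic, of B]) (use B in auto)
qed

definition phi :: "real \<Rightarrow> real" where "phi t = (1 - t) / (1 + t)"

lemma phi_range: "t \<in> {0<..<1} \<Longrightarrow> phi t \<in> {0<..<1}"
  unfolding phi_def by (auto simp: divide_simps)

lemma phi_range2: "t \<in> {0..1} \<Longrightarrow> phi t \<in> {0..1}"
  unfolding phi_def by (auto simp: divide_simps)

lemma arctan_phi: assumes "t \<in> {0..1}" shows "arctan (phi t) = pi / 4 - arctan t"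
proof (cases "t = 1")
  case True thus ?thesis by (simp add: phi_def)
next
  case False
  hence t: "0 \<le> t" "t < 1" using assms by auto
  have p: "\<bar>phi t\<bar> \<le> 1" using phi_range2[OF assms] by auto
  have "arctan (phi t) + arctan t = arctan ((phi t + t) / (1 - phi t * t))"
    by (rule arctan_add[OF p]) (use t in auto)
  also have "(phi t + t) / (1 - phi t * t) = 1"
  proof -
    have a: "phi t + t = (1 + t^2) / (1 + t)" using t unfolding phi_def by (simp add: field_simps power2_eq_square)
    have b: "1 - phi t * t = (1 + t^2) / (1 + t)" using t unfolding phi_def by (simp add: field_simps power2_eq_square)
    have "(1 + t^2) / (1 + t) \<noteq> 0" using t q_pos[of t] by simp
    thus ?thesis unfolding a b by simp
  qed
  finally show ?thesis by simp
qed

lemma phi_sq: assumes "t \<in> {0..1}" shows "(1 / (1 + (phi t)^2)) * (2 / (1 + t)^2) = 1 / (1 + t^2)"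
proof -
  have t: "0 \<le> t" using assms by auto
  have h: "(1 + t)^2 > 0" using t by simp
  have "1 + (phi t)^2 = ((1 + t)^2 + (1 - t)^2) / (1 + t)^2"
    unfolding phi_def power_divide using h by (simp add: add_divide_distrib)
  also have "\<dots> = 2 * (1 + t^2) / (1 + t)^2" by (simp add: power2_eq_square algebra_simps)
  finally have "1 + (phi t)^2 = 2 * (1 + t^2) / (1 + t)^2" .
  thus ?thesis using h q_pos[of t] by (simp add: field_simps)
qed

lemma subst_lemma:
  fixes F :: "real \<Rightarrow> real"
  assumes Fi: "F integrable_on {0..1}" and Fc: "\<And>u. u \<in> {0<..<1} \<Longrightarrow> isCont F u"
  shows "((\<lambda>t. F (phi t) * (2 / (1 + t)^2)) has_integral integral {0..1} F) {0..1}"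
proof -
  define \<Phi> where "\<Phi> x = integral {0..x} F" for x
  have c\<Phi>: "continuous_on {0..1} \<Phi>" unfolding \<Phi>_def by (rule indefinite_integral_continuous_1[OF Fi])
  have cphi: "continuous_on {0..1} phi" unfolding phi_def by (intro continuous_intros) auto
  have "((\<lambda>t. F (phi t) * (2 / (1 + t)^2)) has_integral ((- \<Phi> (phi 1)) - (- \<Phi> (phi 0)))) {0..1}"
  proof (rule fundamental_theorem_of_calculus_interior)
    show "continuous_on {0..1} (\<lambda>t. - \<Phi> (phi t))"
      by (intro continuous_intros continuous_on_compose2[OF c\<Phi> cphi]) (use phi_range2 in auto)
    fix t :: real assume t: "t \<in> {0<..<1}"
    have d1: "(\<Phi> has_real_derivative F (phi t)) (at (phi t))"
      unfolding \<Phi>_def by (rule indef_deriv[OF Fi phi_range[OF t] Fc[OF phi_range[OF t]]])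
    have d2: "(phi has_real_derivative (- 2 / (1 + t)^2)) (at t)"
      unfolding phi_def using t by (auto intro!: derivative_eq_intros simp: field_simps power2_eq_square)
    have "((\<lambda>t. - \<Phi> (phi t)) has_real_derivative - (F (phi t) * (- 2 / (1 + t)^2))) (at t)"
      by (rule DERIV_minus, rule DERIV_chain2[OF d1 d2])
    thus "((\<lambda>t. - \<Phi> (phi t)) has_vector_derivative F (phi t) * (2 / (1 + t)^2)) (at t)"
      by (simp add: has_real_derivative_iff_has_vector_derivative)
  qed simp
  moreover have "phi 1 = 0" "phi 0 = 1" by (auto simp: phi_def)
  ultimately show ?thesis by (simp add: \<Phi>_def)
qed



lemma transform:
  fixes h :: "real \<Rightarrow> real"
  assumes hc: "continuous_on UNIV h"
  shows "integral {0..1} (\<lambda>s. lg 1 j s * (h (arctan s) / (1 + s^2)))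
       = (-1)^j / fact j * integral {0..1} (\<lambda>t. ln ((1 - t) / (1 + t)) ^ j * h (pi / 4 - arctan t) / (1 + t^2))"
proof -
  define F where "F s = lg 1 j s * (h (arctan s) / (1 + s^2))" for s
  define g where "g t = ln ((1 - t) / (1 + t)) ^ j * h (pi / 4 - arctan t) / (1 + t^2)" for t
  define c :: real where "c = (-1)^j / fact j"
  have qnz: "\<And>s. 1 + s^2 \<noteq> (0::real)" using q_pos by (metis less_irrefl)
  have Fi: "F integrable_on {0..1}" unfolding F_def
    by (rule kernel_int[OF _ lg_kernel]) (auto intro!: continuous_intros continuous_on_compose2[OF hc] simp: qnz lg_nonneg)
  have Fc: "isCont F u" if u: "u \<in> {0<..<1}" for u
  proof -
    have "isCont h (arctan u)" using hc by (simp add: continuous_on_eq_continuous_at)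
    hence "isCont (\<lambda>s. h (arctan s)) u" by (intro continuous_at_compose[of u arctan h, unfolded comp_def]) (auto intro: continuous_intros)
    thus ?thesis unfolding F_def lg_def using u qnz by (auto intro!: continuous_intros)
  qed
  have S: "((\<lambda>t. F (phi t) * (2 / (1 + t)^2)) has_integral integral {0..1} F) {0..1}"
    by (rule subst_lemma[OF Fi Fc])
  have eq: "F (phi t) * (2 / (1 + t)^2) = c * g t" if t: "t \<in> {0..1}" for t
  proof -
    have "F (phi t) * (2 / (1 + t)^2) = lg 1 j (phi t) * h (arctan (phi t)) * ((1 / (1 + (phi t)^2)) * (2 / (1 + t)^2))"
      unfolding F_def by (simp add: field_simps)
    also have "\<dots> = lg 1 j (phi t) * h (pi / 4 - arctan t) / (1 + t^2)"
      unfolding phi_sq[OF t] arctan_phi[OF t] by simp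
    also have "lg 1 j (phi t) = c * ln ((1 - t) / (1 + t)) ^ j"
      unfolding lg_def c_def phi_def by (simp add: power_minus' field_simps)
    finally show ?thesis unfolding g_def by simp
  qed
  have "((\<lambda>t. c * g t) has_integral integral {0..1} F) {0..1}"
    using S by (rule has_integral_eq[rotated]) (rule eq, assumption)
  hence "((\<lambda>t. (1 / c) * (c * g t)) has_integral (1 / c) * integral {0..1} F) {0..1}"
    by (rule has_integral_mult_right)
  moreover have "c \<noteq> 0" unfolding c_def by simp
  ultimately have "(g has_integral (1 / c) * integral {0..1} F) {0..1}" by simp
  hence "integral {0..1} g = (1 / c) * integral {0..1} F" by (rule integral_unique)
  hence "integral {0..1} F = c * integral {0..1} g" using \<open>c \<noteq> 0\<close> by (simp add: field_simps)
  thus ?thesis unfolding F_def g_def c_def .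
qed

lemma alg2:
  fixes x a b c d I :: real
  shows "x * (a / b * (c / d * I)) = (a * c) * x / (b * d) * I"
  by (simp add: divide_inverse mult_ac)

lemma alg3:
  fixes L m P f q :: real
  shows "L * (- (m * P / f)) / q = (-1) * m / f * (L * P / q)"
  by (simp add: divide_inverse mult_ac)

theorem formula2:
  fixes k r :: nat
  assumes "0 < k" and "0 < r"
  shows "Tbar (replicate (r - 1) 1 @ [k]) =
           (-1) ^ (k + r - 1) * 2 ^ r / (fact (k - 1) * fact (r - 1)) *
           integral {0..1} (\<lambda>t::real. ln ((1 - t) / (1 + t)) ^ (k - 1) * (pi / 4 - arctan t) ^ (r - 1)
                                        / (1 + t\<^sup>2))"
proof -
  define ks where "ks = replicate (r - 1) (1::nat) @ [k]"
  define I where "I = integral {0..1} (\<lambda>t::real. ln ((1 - t) / (1 + t)) ^ (k - 1) * (pi / 4 - arctan t) ^ (r - 1)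
                                        / (1 + t\<^sup>2))"
  have len: "length ks = r" using assms unfolding ks_def by simp
  have e1: "Tbar ks = 2 ^ r * Gl ks 1"
    using Tbar_eq[of ks] assms len unfolding ks_def by auto
  have e2: "Gl ks 1 = integral {0..1} (\<lambda>s. lg 1 (k - 1) s * (- ((- arctan s) ^ (r - 1) / fact (r - 1)) / (1 + s^2)))"
    unfolding ks_def Gl_snoc
  proof (intro integral_cong)
    fix s :: real assume "s \<in> {0..1}"
    from Gl_rep[OF this, of "r - 1"] show "lg 1 (k - 1) s * (- Gl (replicate (r - 1) 1) s / (1 + s^2))
       = lg 1 (k - 1) s * (- ((- arctan s) ^ (r - 1) / fact (r - 1)) / (1 + s^2))" by simp
  qed
  have e3: "integral {0..1} (\<lambda>s. lg 1 (k - 1) s * (- ((- arctan s) ^ (r - 1) / fact (r - 1)) / (1 + s^2)))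
     = (-1)^(k-1) / fact (k-1) * integral {0..1} (\<lambda>t. ln ((1 - t) / (1 + t)) ^ (k - 1)
                     * (- ((- (pi / 4 - arctan t)) ^ (r - 1) / fact (r - 1))) / (1 + t^2))"
    by (rule transform[where h = "\<lambda>a. - ((- a) ^ (r - 1) / fact (r - 1))"]) (intro continuous_intros, simp)
  have e4: "integral {0..1} (\<lambda>t. ln ((1 - t) / (1 + t)) ^ (k - 1)
                     * (- ((- (pi / 4 - arctan t)) ^ (r - 1) / fact (r - 1))) / (1 + t^2))
           = ((-1) * (-1)^(r-1) / fact (r - 1)) * I"
    unfolding I_def integral_mult_right[symmetric]
  proof (intro integral_cong)
    fix t :: real
    show "ln ((1 - t) / (1 + t)) ^ (k - 1) * (- ((- (pi / 4 - arctan t)) ^ (r - 1) / fact (r - 1))) / (1 + t^2)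
        = (-1) * (-1)^(r-1) / fact (r - 1) * (ln ((1 - t) / (1 + t)) ^ (k - 1) * (pi / 4 - arctan t) ^ (r - 1) / (1 + t\<^sup>2))"
      by (simp only: power_minus[of "pi / 4 - arctan t"] alg3)
  qed
  have e5: "(-1::real)^(k-1) * ((-1) * (-1)^(r-1)) = (-1)^(k + r - 1)"
  proof -
    have "k + r - 1 = (k - 1) + (Suc 0 + (r - 1))" using assms by simp
    hence "(-1::real)^(k + r - 1) = (-1)^(k-1) * ((-1)^(Suc 0) * (-1)^(r-1))" by (simp only: power_add)
    thus ?thesis by simp
  qed
  have "Tbar ks = 2 ^ r * ((-1)^(k-1) / fact (k-1) * (((-1) * (-1)^(r-1) / fact (r - 1)) * I))"
    unfolding e1 e2 e3 e4 ..
  also have "\<dots> = ((-1)^(k-1) * ((-1) * (-1)^(r-1))) * 2 ^ r / (fact (k-1) * fact (r - 1)) * I"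
    by (rule alg2)
  finally show ?thesis unfolding e5 ks_def I_def .
qed



lemma lg_expand: "lg t j s = (\<Sum>a\<le>j. lg t a 1 * lg 1 (j - a) s)"
proof -
  have "lg t j s = (ln t + (- ln s))^j / fact j" by (simp add: lg_def)
  also have "\<dots> = (\<Sum>a\<le>j. of_nat (j choose a) * (ln t)^a * (- ln s)^(j - a)) / fact j"
    by (simp only: binomial_ring)
  also have "\<dots> = (\<Sum>a\<le>j. of_nat (j choose a) * (ln t)^a * (- ln s)^(j - a) / fact j)"
    by (simp add: sum_divide_distrib)
  also have "\<dots> = (\<Sum>a\<le>j. lg t a 1 * lg 1 (j - a) s)"
  proof (intro sum.cong refl)
    fix a assume "a \<in> {..j}"
    hence "(of_nat (j choose a) :: real) = fact j / (fact a * fact (j - a))" by (intro binomial_fact) simp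
    thus "of_nat (j choose a) * (ln t)^a * (- ln s)^(j - a) / fact j = lg t a 1 * lg 1 (j - a) s"
      by (simp add: lg_def)
  qed
  finally show ?thesis .
qed

lemma lg_diag: "(\<Sum>a\<le>j. lg u a 1 * lg 1 (j - a) u) = (if j = 0 then 1 else 0)"
  using lg_expand[of u j u, symmetric] by (cases j) (auto simp: lg_def)

lemma lg_deriv1:
  assumes "t > 0"
  shows "((\<lambda>t. lg t (Suc a) c) has_real_derivative (lg t a c / t)) (at t)"
proof -
  have "((\<lambda>t. (ln t - ln c)^(Suc a)) has_real_derivative (real (Suc a) * (ln t - ln c)^a * (inverse t - 0))) (at t)"
    using assms apply (auto intro!: derivative_eq_intros)
    apply (cases a) apply (auto simp: field_simps)
    done
  then have d: "((\<lambda>t. (ln t - ln c)^(Suc a) / fact (Suc a)) has_real_derivative (real (Suc a) * (ln t - ln c)^a * (inverse t - 0)) / fact (Suc a)) (at t)"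
    by (rule DERIV_cdivide)
  have "(real (Suc a) * (ln t - ln c)^a * (inverse t - 0)) / fact (Suc a)
        = (real (Suc a) * ((ln t - ln c)^a * inverse t)) / (real (Suc a) * fact a)"
    by (simp add: fact_Suc mult.assoc)
  also have "\<dots> = ((ln t - ln c)^a * inverse t) / fact a"
    by (rule mult_divide_mult_cancel_left) simp
  also have "\<dots> = lg t a c / t" unfolding lg_def by (simp add: divide_inverse mult_ac)
  finally show ?thesis using d unfolding lg_def by simp
qed

definition Dlg :: "nat \<Rightarrow> real \<Rightarrow> real" where
  "Dlg a t = (if a = 0 then 0 else lg t (a - 1) 1 / t)"

lemma lg1_deriv: "t > 0 \<Longrightarrow> ((\<lambda>t. lg t a 1) has_real_derivative Dlg a t) (at t)"
  by (cases a) (auto simp: Dlg_def lg_deriv1)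

lemma lg1_integrable: "t \<in> {0..1} \<Longrightarrow> continuous_on {0..1} \<psi> \<Longrightarrow> (\<lambda>s. lg 1 b s * \<psi> s) integrable_on {0..t}"
proof -
  assume t: "t \<in> {0..1}" and c: "continuous_on {0..1} \<psi>"
  have "(\<lambda>s. lg 1 b s * \<psi> s) integrable_on {0..1}"
    by (rule kernel_int[OF _ lg_kernel _ c]) (auto intro: lg_nonneg)
  thus ?thesis by (rule integrable_on_subinterval) (use t in auto)
qed

lemma K_expand:
  assumes t: "t \<in> {0..1}" and c: "continuous_on {0..1} \<psi>"
  shows "integral {0..t} (\<lambda>s. lg t j s * \<psi> s) = (\<Sum>a\<le>j. lg t a 1 * integral {0..t} (\<lambda>s. lg 1 (j - a) s * \<psi> s))"
proof -
  have "integral {0..t} (\<lambda>s. lg t j s * \<psi> s) = integral {0..t} (\<lambda>s. \<Sum>a\<le>j. lg t a 1 * (lg 1 (j - a) s * \<psi> s))"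
    by (intro integral_cong) (simp add: lg_expand[of t j] sum_distrib_left sum_distrib_right mult_ac)
  also have "\<dots> = (\<Sum>a\<le>j. integral {0..t} (\<lambda>s. lg t a 1 * (lg 1 (j - a) s * \<psi> s)))"
    by (rule integral_sum) (auto intro!: has_integral_integrable[OF has_integral_mult_right[OF integrable_integral[OF lg1_integrable[OF t c]]]])
  also have "\<dots> = (\<Sum>a\<le>j. lg t a 1 * integral {0..t} (\<lambda>s. lg 1 (j - a) s * \<psi> s))"
    by simp
  finally show ?thesis .
qed

lemma K_deriv:
  assumes c: "continuous_on {0..1} \<psi>" and u: "u \<in> {0<..<1}"
  shows "((\<lambda>t. integral {0..t} (\<lambda>s. lg t (Suc j) s * \<psi> s)) has_real_derivative
           integral {0..u} (\<lambda>s. lg u j s * \<psi> s) / u) (at u)"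
proof -
  define J where "J b t = integral {0..t} (\<lambda>s. lg 1 b s * \<psi> s)" for b t
  have u0: "u > 0" using u by simp
  have Jd: "(J b has_real_derivative (lg 1 b u * \<psi> u)) (at u)" for b
  proof -
    have "(\<lambda>s. lg 1 b s * \<psi> s) integrable_on {0..1}" by (rule lg1_integrable[OF _ c]) simp
    moreover have "isCont (\<lambda>s. lg 1 b s * \<psi> s) u"
    proof -
      have "isCont \<psi> u" using c u by (intro continuous_on_interior[of "{0..1}"]) auto
      thus ?thesis unfolding lg_def using u0 by (auto intro!: continuous_intros)
    qed
    ultimately show ?thesis unfolding J_def by (rule indef_deriv[OF _ u])
  qed
  have E: "((\<lambda>t. \<Sum>a\<le>Suc j. lg t a 1 * J (Suc j - a) t) has_real_derivative
            (\<Sum>a\<le>Suc j. Dlg a u * J (Suc j - a) u + lg 1 (Suc j - a) u * \<psi> u * lg u a 1)) (at u)"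
    by (intro DERIV_sum DERIV_mult lg1_deriv Jd u0)
  have "(\<Sum>a\<le>Suc j. Dlg a u * J (Suc j - a) u + lg 1 (Suc j - a) u * \<psi> u * lg u a 1)
      = (\<Sum>a\<le>Suc j. Dlg a u * J (Suc j - a) u) + (\<Sum>a\<le>Suc j. lg u a 1 * lg 1 (Suc j - a) u) * \<psi> u"
    by (simp add: sum.distrib sum_distrib_right sum_distrib_left distrib_left mult_ac)
  also have "(\<Sum>a\<le>Suc j. lg u a 1 * lg 1 (Suc j - a) u) = 0" by (simp only: lg_diag) simp
  also have "(\<Sum>a\<le>Suc j. Dlg a u * J (Suc j - a) u) = (\<Sum>a\<le>j. lg u a 1 * J (j - a) u) / u"
    by (subst sum.atMost_Suc_shift) (simp add: Dlg_def sum_divide_distrib)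
  also have "(\<Sum>a\<le>j. lg u a 1 * J (j - a) u) = integral {0..u} (\<lambda>s. lg u j s * \<psi> s)"
    unfolding J_def by (rule K_expand[symmetric]) (use u c in auto)
  finally have E2: "((\<lambda>t. \<Sum>a\<le>Suc j. lg t a 1 * J (Suc j - a) t) has_real_derivative
           integral {0..u} (\<lambda>s. lg u j s * \<psi> s) / u) (at u)" using E by simp
  show ?thesis
  proof (rule has_field_derivative_transform_within_open[OF E2, of "{0<..<1}"])
    fix t :: real assume "t \<in> {0<..<1}"
    thus "(\<Sum>a\<le>Suc j. lg t a 1 * J (Suc j - a) t) = integral {0..t} (\<lambda>s. lg t (Suc j) s * \<psi> s)"
      unfolding J_def by (intro K_expand[symmetric] c) auto
  qed (use u in auto)
qed

lemma K0_deriv: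
  assumes c: "continuous_on {0..1} \<psi>" and u: "u \<in> {0<..<1}"
  shows "((\<lambda>t. integral {0..t} (\<lambda>s. lg t 0 s * \<psi> s)) has_real_derivative \<psi> u) (at u)"
proof -
  have "\<psi> integrable_on {0..1}" using c by (rule integrable_continuous_real)
  moreover have "isCont \<psi> u" using c u by (intro continuous_on_interior[of "{0..1}"]) auto
  ultimately show ?thesis by (simp add: indef_deriv[OF _ u])
qed



lemma Gl_cont: "\<forall>k\<in>set ks. k \<ge> 1 \<Longrightarrow> continuous_on {0..1} (Gl ks)"
  by (rule uniform_limit_theorem[OF _ Gconv]) (auto simp: G_cont)

lemma Gl_zero: "ks \<noteq> [] \<Longrightarrow> Gl ks 0 = 0"
  by (cases ks rule: rev_cases) (auto simp: Gl_snoc)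

lemma Gl_deriv_Suc:
  assumes "\<forall>k\<in>set ks0. k \<ge> 1" "u \<in> {0<..<1}" "k \<ge> 1"
  shows "(Gl (ks0 @ [Suc k]) has_real_derivative Gl (ks0 @ [k]) u / u) (at u)"
proof -
  obtain j where k: "k = Suc j" using assms by (cases k) auto
  have c: "continuous_on {0..1} (\<lambda>s. - Gl ks0 s / (1 + s^2))"
    using Gl_cont[OF assms(1)] q_pos by (intro continuous_intros) (auto simp: less_irrefl intro!: order.strict_implies_not_eq[symmetric])
  have "Gl (ks0 @ [Suc k]) = (\<lambda>t. integral {0..t} (\<lambda>s. lg t (Suc j) s * (- Gl ks0 s / (1 + s^2))))"
    by (rule ext) (simp add: Gl_snoc k)
  moreover have "Gl (ks0 @ [k]) u = integral {0..u} (\<lambda>s. lg u j s * (- Gl ks0 s / (1 + s^2)))"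
    by (simp add: Gl_snoc k)
  ultimately show ?thesis using K_deriv[OF c assms(2), of j] by simp
qed

lemma Gl_deriv_1:
  assumes "\<forall>k\<in>set ks0. k \<ge> 1" "u \<in> {0<..<1}"
  shows "(Gl (ks0 @ [1]) has_real_derivative - Gl ks0 u / (1 + u^2)) (at u)"
proof -
  have c: "continuous_on {0..1} (\<lambda>s. - Gl ks0 s / (1 + s^2))"
    using Gl_cont[OF assms(1)] q_pos by (intro continuous_intros) (auto simp: less_irrefl intro!: order.strict_implies_not_eq[symmetric])
  have "Gl (ks0 @ [1]) = (\<lambda>t. integral {0..t} (\<lambda>s. lg t 0 s * (- Gl ks0 s / (1 + s^2))))"
    by (rule ext) (simp add: Gl_snoc)
  thus ?thesis using K0_deriv[OF c assms(2)] by simp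
qed

lemma Gl_lin:
  assumes "ks \<noteq> []" "\<forall>k\<in>set ks. k \<ge> 1"
  shows "\<exists>C. \<forall>s\<in>{0..1}. \<bar>Gl ks s\<bar> \<le> C * s"
proof -
  obtain ks0 k where ks: "ks = ks0 @ [k]" using assms(1) by (cases ks rule: rev_cases) auto
  have ks0: "\<forall>k\<in>set ks0. k \<ge> 1" using assms ks by auto
  define \<psi> where "\<psi> s = - Gl ks0 s / (1 + s^2)" for s
  have c: "continuous_on {0..1} \<psi>" unfolding \<psi>_def
    using Gl_cont[OF ks0] q_pos by (intro continuous_intros) (auto simp: less_irrefl intro!: order.strict_implies_not_eq[symmetric])
  have "bounded (\<psi> ` {0..1})" by (rule compact_imp_bounded, rule compact_continuous_image[OF c]) simp
  then obtain B where B: "\<forall>y\<in>\<psi> ` {0..1}. norm y \<le> B" by (auto simp: bounded_iff)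
  have "\<forall>s\<in>{0..1}. \<bar>Gl ks s\<bar> \<le> B * s"
  proof
    fix s :: real assume s: "s \<in> {0..1}"
    have "\<bar>integral {0..s} (\<lambda>u. lg s (k - 1) u * \<psi> u)\<bar> \<le> B * s"
      by (rule kernel_bound(2)[OF _ lg_kernel]) (use s B in \<open>auto intro: lg_nonneg continuous_on_subset[OF c]\<close>)
    thus "\<bar>Gl ks s\<bar> \<le> B * s" unfolding ks Gl_snoc \<psi>_def .
  qed
  thus ?thesis by blast
qed

lemma finite_I_set: "finite (I_set k r)"
proof -
  have "I_set k r \<subseteq> {ks. set ks \<subseteq> {0..k} \<and> length ks = r}"
    unfolding I_set_def using member_le_sum_list by fastforce
  moreover have "finite {ks. set ks \<subseteq> {0..k} \<and> length ks = r}"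
    by (rule finite_lists_length_eq) simp
  ultimately show ?thesis by (rule finite_subset)
qed

lemma I_set_0: "I_set q 0 = (if q = 0 then {[]} else {})"
  unfolding I_set_def by auto

lemma I_set_pos: "ks \<in> I_set n r \<Longrightarrow> \<forall>k\<in>set ks. k \<ge> 1"
  unfolding I_set_def by auto

lemma I_set_len: "ks \<in> I_set n r \<Longrightarrow> length ks = r"
  unfolding I_set_def by auto

lemma len_le_sum: "\<forall>y\<in>set xs. (0::nat) < y \<Longrightarrow> length xs \<le> sum_list xs"
  by (induction xs) auto

lemma I_set_Suc:
  "I_set (Suc m + q) (Suc m) = (\<lambda>(c, ks0). ks0 @ [Suc c]) ` (SIGMA c:{..q}. I_set (m + (q - c)) m)"
proof (rule set_eqI)
  fix xs
  show "xs \<in> I_set (Suc m + q) (Suc m) \<longleftrightarrow> xs \<in> (\<lambda>(c, ks0). ks0 @ [Suc c]) ` (SIGMA c:{..q}. I_set (m + (q - c)) m)"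
  proof
    assume a: "xs \<in> I_set (Suc m + q) (Suc m)"
    hence "length xs = Suc m" by (simp add: I_set_def)
    then obtain ks0 x where xs: "xs = ks0 @ [x]" by (metis length_Suc_conv_rev append_Cons append.simps(1) rev_eq_Cons_iff)
    have x: "x > 0" "sum_list ks0 + x = Suc m + q" "length ks0 = m" "\<forall>y\<in>set ks0. 0 < y"
      using a unfolding xs I_set_def by auto
    obtain c where c: "x = Suc c" using x by (cases x) auto
    have "sum_list ks0 \<ge> m" using x(3,4) len_le_sum by metis
    hence "c \<le> q" "sum_list ks0 = m + (q - c)" using x c by auto
    hence "ks0 \<in> I_set (m + (q - c)) m" using x unfolding I_set_def by auto
    thus "xs \<in> (\<lambda>(c, ks0). ks0 @ [Suc c]) ` (SIGMA c:{..q}. I_set (m + (q - c)) m)"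
      using xs c \<open>c \<le> q\<close> by force
  next
    assume "xs \<in> (\<lambda>(c, ks0). ks0 @ [Suc c]) ` (SIGMA c:{..q}. I_set (m + (q - c)) m)"
    then obtain c ks0 where "c \<le> q" "ks0 \<in> I_set (m + (q - c)) m" "xs = ks0 @ [Suc c]" by auto
    thus "xs \<in> I_set (Suc m + q) (Suc m)" unfolding I_set_def by auto
  qed
qed

lemma sum_I_set_Suc:
  fixes F :: "nat list \<Rightarrow> real"
  shows "(\<Sum>ks\<in>I_set (Suc m + q) (Suc m). F ks) = (\<Sum>c\<le>q. \<Sum>ks0\<in>I_set (m + (q - c)) m. F (ks0 @ [Suc c]))"
proof -
  have inj: "inj_on (\<lambda>(c, ks0). ks0 @ [Suc c]) (SIGMA c:{..q}. I_set (m + (q - c)) m)"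
    by (auto simp: inj_on_def)
  have "(\<Sum>ks\<in>I_set (Suc m + q) (Suc m). F ks) = (\<Sum>(c, ks0)\<in>(SIGMA c:{..q}. I_set (m + (q - c)) m). F (ks0 @ [Suc c]))"
    unfolding I_set_Suc by (subst sum.reindex[OF inj]) (simp add: case_prod_beta comp_def)
  also have "\<dots> = (\<Sum>c\<le>q. \<Sum>ks0\<in>I_set (m + (q - c)) m. F (ks0 @ [Suc c]))"
    by (rule sum.Sigma[symmetric]) (auto simp: finite_I_set)
  finally show ?thesis .
qed

definition Phi :: "nat \<Rightarrow> nat \<Rightarrow> real \<Rightarrow> real" where
  "Phi m q t = (\<Sum>ks\<in>I_set (m + q) m. Gl ks t)"

lemma Phi_0: "Phi 0 q t = (if q = 0 then 1 else 0)"
  by (simp add: Phi_def I_set_0 Gl_Nil)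

lemma Phi_cont: "continuous_on {0..1} (Phi m q)"
  unfolding Phi_def by (intro continuous_on_sum Gl_cont) (auto dest: I_set_pos)

lemma Phi_zero: "Phi (Suc m) q 0 = 0"
  unfolding Phi_def by (intro sum.neutral ballI Gl_zero) (auto dest: I_set_len)

lemma Phi_lin: "\<exists>C. \<forall>s\<in>{0..1}. \<bar>Phi (Suc m) q s\<bar> \<le> C * s"
proof -
  let ?A = "I_set (Suc m + q) (Suc m)"
  have "\<forall>ks\<in>?A. \<exists>C. \<forall>s\<in>{0..1}. \<bar>Gl ks s\<bar> \<le> C * s"
    by (intro ballI Gl_lin) (auto dest: I_set_pos I_set_len)
  then obtain C where C: "\<forall>ks\<in>?A. \<forall>s\<in>{0..1}. \<bar>Gl ks s\<bar> \<le> C ks * s" by metis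
  have "\<forall>s\<in>{0..1}. \<bar>Phi (Suc m) q s\<bar> \<le> (\<Sum>ks\<in>?A. C ks) * s"
  proof
    fix s :: real assume s: "s \<in> {0..1}"
    have "\<bar>Phi (Suc m) q s\<bar> \<le> (\<Sum>ks\<in>?A. \<bar>Gl ks s\<bar>)" unfolding Phi_def by (simp add: sum_abs)
    also have "\<dots> \<le> (\<Sum>ks\<in>?A. C ks * s)" using C s by (intro sum_mono) auto
    finally show "\<bar>Phi (Suc m) q s\<bar> \<le> (\<Sum>ks\<in>?A. C ks) * s" by (simp add: sum_distrib_right)
  qed
  thus ?thesis by blast
qed

lemma Phi_deriv:
  assumes u: "u \<in> {0<..<1}"
  shows "(Phi (Suc m) q has_real_derivative
            ((if q = 0 then 0 else Phi (Suc m) (q - 1) u / u) - Phi m q u / (1 + u^2))) (at u)"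
proof -
  define D where "D c ks0 = (if c = 0 then - Gl ks0 u / (1 + u^2) else Gl (ks0 @ [c]) u / u)" for c ks0
  have eqf: "Phi (Suc m) q = (\<lambda>t. \<Sum>c\<le>q. \<Sum>ks0\<in>I_set (m + (q - c)) m. Gl (ks0 @ [Suc c]) t)"
    by (rule ext) (unfold Phi_def sum_I_set_Suc, rule refl)
  have d: "(Phi (Suc m) q has_real_derivative (\<Sum>c\<le>q. \<Sum>ks0\<in>I_set (m + (q - c)) m. D c ks0)) (at u)"
    unfolding eqf
  proof (intro DERIV_sum)
    fix c ks0 assume ks0: "ks0 \<in> I_set (m + (q - c)) m"
    have p: "\<forall>k\<in>set ks0. k \<ge> 1" using I_set_pos[OF ks0] .
    show "((\<lambda>t. Gl (ks0 @ [Suc c]) t) has_real_derivative D c ks0) (at u)"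
    proof (cases c)
      case 0 thus ?thesis using Gl_deriv_1[OF p u] by (simp add: D_def)
    next
      case (Suc c') thus ?thesis using Gl_deriv_Suc[OF p u, of "Suc c'"] by (simp add: D_def)
    qed
  qed
  have "(\<Sum>c\<le>q. \<Sum>ks0\<in>I_set (m + (q - c)) m. D c ks0)
      = ((if q = 0 then 0 else Phi (Suc m) (q - 1) u / u) - Phi m q u / (1 + u^2))"
  proof (cases q)
    case 0 thus ?thesis by (simp add: D_def Phi_def sum_negf sum_divide_distrib)
  next
    case (Suc q')
    have "(\<Sum>c\<le>q. \<Sum>ks0\<in>I_set (m + (q - c)) m. D c ks0)
        = (\<Sum>ks0\<in>I_set (m + q) m. D 0 ks0) + (\<Sum>c\<le>q'. \<Sum>ks0\<in>I_set (m + (q' - c)) m. D (Suc c) ks0)"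
      unfolding Suc by (subst sum.atMost_Suc_shift) simp
    also have "(\<Sum>ks0\<in>I_set (m + q) m. D 0 ks0) = - Phi m q u / (1 + u^2)"
      by (simp add: D_def Phi_def sum_negf sum_divide_distrib)
    also have "(\<Sum>c\<le>q'. \<Sum>ks0\<in>I_set (m + (q' - c)) m. D (Suc c) ks0) = Phi (Suc m) q' u / u"
      unfolding Phi_def sum_I_set_Suc sum_divide_distrib by (simp add: D_def)
    finally show ?thesis using Suc by simp
  qed
  with d show ?thesis by simp
qed



definition R :: "nat \<Rightarrow> nat \<Rightarrow> real \<Rightarrow> real" where
  "R m e t = (\<Sum>a\<le>e. lg 1 a t * Phi m (e - a) t)"

lemma R_0: "R 0 e t = lg 1 e t"
proof -
  have "R 0 e t = (\<Sum>a\<le>e. if a = e then lg 1 a t else 0)"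
    unfolding R_def Phi_0 by (intro sum.cong refl) auto
  thus ?thesis by simp
qed

lemma R_one: "R m e 1 = Phi m e 1"
proof -
  have "R m e 1 = (\<Sum>a\<le>e. if a = 0 then Phi m e 1 else 0)"
    unfolding R_def by (intro sum.cong refl) (simp add: lg_def)
  thus ?thesis by simp
qed

lemma R_zero: "R (Suc m) e 0 = 0"
  unfolding R_def by (simp add: Phi_zero)

definition Dl :: "nat \<Rightarrow> real \<Rightarrow> real" where
  "Dl a u = (if a = 0 then 0 else - lg 1 (a - 1) u / u)"

lemma lgs_deriv: "u > 0 \<Longrightarrow> (lg 1 a has_real_derivative Dl a u) (at u)"
proof (cases a)
  case 0
  have "lg 1 0 = (\<lambda>_. 1)" by (rule ext) simp
  thus ?thesis using 0 by (simp add: Dl_def)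
next
  case (Suc j)
  assume "u > 0"
  thus ?thesis using lg_deriv[of u 1 j] Suc by (simp add: Dl_def)
qed

lemma R_deriv:
  assumes u: "u \<in> {0<..<1}"
  shows "(R (Suc m) e has_real_derivative - R m e u / (1 + u^2)) (at u)"
proof -
  define P where "P q = Phi (Suc m) q u" for q
  define PD where "PD q = (if q = 0 then 0 else P (q - 1) / u) - Phi m q u / (1 + u^2)" for q
  have u0: "u > 0" using u by simp
  have d: "(R (Suc m) e has_real_derivative (\<Sum>a\<le>e. Dl a u * P (e - a) + PD (e - a) * lg 1 a u)) (at u)"
    unfolding R_def[abs_def] P_def PD_def
    by (intro DERIV_sum DERIV_mult lgs_deriv u0 Phi_deriv u)
  have s: "(\<Sum>a\<le>e. Dl a u * P (e - a) + PD (e - a) * lg 1 a u)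
      = ((\<Sum>a\<le>e. Dl a u * P (e - a)) + (\<Sum>a\<le>e. (if e - a = 0 then 0 else P (e - a - 1) / u) * lg 1 a u))
        - (\<Sum>a\<le>e. lg 1 a u * Phi m (e - a) u) / (1 + u^2)"
    unfolding PD_def by (simp add: sum.distrib sum_subtractf sum_divide_distrib algebra_simps)
  have z: "(\<Sum>a\<le>e. Dl a u * P (e - a)) + (\<Sum>a\<le>e. (if e - a = 0 then 0 else P (e - a - 1) / u) * lg 1 a u) = 0"
  proof (cases e)
    case 0 thus ?thesis by (simp add: Dl_def)
  next
    case (Suc e')
    have 1: "(\<Sum>a\<le>e. Dl a u * P (e - a)) = (\<Sum>a\<le>e'. - (lg 1 a u * P (e' - a) / u))"
      unfolding Suc by (subst sum.atMost_Suc_shift) (simp add: Dl_def)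
    have 2: "(\<Sum>a\<le>e. (if e - a = 0 then 0 else P (e - a - 1) / u) * lg 1 a u) = (\<Sum>a\<le>e'. lg 1 a u * P (e' - a) / u)"
      unfolding Suc by (subst sum.atMost_Suc) (auto intro!: sum.cong simp: Suc_diff_le)
    show ?thesis unfolding 1 2 by (simp add: sum_negf)
  qed
  have "(\<Sum>a\<le>e. Dl a u * P (e - a) + PD (e - a) * lg 1 a u) = - R m e u / (1 + u^2)"
    unfolding s z R_def by simp
  with d show ?thesis by simp
qed

lemma R_cont: "continuous_on {0..1} (R (Suc m) e)"
  unfolding R_def[abs_def]
proof (intro continuous_on_sum)
  fix a assume "a \<in> {..e}"
  show "continuous_on {0..1} (\<lambda>t. lg 1 a t * Phi (Suc m) (e - a) t)"
  proof (rule continuous_on_eq_continuous_within[THEN iffD2], intro ballI)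
    fix s :: real assume s: "s \<in> {0..1}"
    have cP: "continuous (at s within {0..1}) (Phi (Suc m) (e - a))"
      using Phi_cont s by (simp add: continuous_on_eq_continuous_within)
    show "continuous (at s within {0..1}) (\<lambda>t. lg 1 a t * Phi (Suc m) (e - a) t)"
    proof (cases "s = 0")
      case False
      hence "s > 0" using s by simp
      hence "isCont (lg 1 a) s" unfolding lg_def by (auto intro!: continuous_intros)
      hence "continuous (at s within {0..1}) (lg 1 a)" by (rule continuous_at_imp_continuous_at_within)
      thus ?thesis using cP by (intro continuous_mult)
    next
      case True
      obtain C where C: "\<forall>s\<in>{0..1}. \<bar>Phi (Suc m) (e - a) s\<bar> \<le> C * s" using Phi_lin by blast
      have lim0: "((\<lambda>s. C * norm (s^1 * lg 1 a s)) \<longlongrightarrow> 0) (at_right 0)"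
        using tendsto_mult_right_zero[OF tendsto_norm_zero[OF tendsto_pow_lg[of 1 1 a]]] by simp
      have ev: "\<forall>\<^sub>F s in at_right 0. norm (lg 1 a s * Phi (Suc m) (e - a) s) \<le> C * norm (s^1 * lg 1 a s)"
      proof -
        have "\<forall>\<^sub>F s in at_right (0::real). s < 1"
          by (rule eventually_at_rightI[of 0 1]) auto
        moreover have "\<forall>\<^sub>F s in at_right (0::real). s > 0"
          by (simp add: eventually_at_right_less)
        ultimately show ?thesis
        proof eventually_elim
          case (elim s)
          hence s01: "s \<in> {0..1}" by simp
          have "norm (lg 1 a s * Phi (Suc m) (e - a) s) = \<bar>lg 1 a s\<bar> * \<bar>Phi (Suc m) (e - a) s\<bar>"
            by (simp add: abs_mult)
          also have "\<dots> \<le> \<bar>lg 1 a s\<bar> * (C * s)" using C s01 by (intro mult_left_mono) auto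
          also have "\<dots> = C * norm (s^1 * lg 1 a s)" using elim by (simp add: abs_mult)
          finally show ?case .
        qed
      qed
      have lim: "((\<lambda>s. lg 1 a s * Phi (Suc m) (e - a) s) \<longlongrightarrow> 0) (at_right 0)"
        by (rule Lim_null_comparison[OF ev lim0])
      have ae: "at (0::real) within {0..1} = at_right 0" by (simp add: at_within_Icc_at_right)
      have ze: "lg 1 a 0 * Phi (Suc m) (e - a) 0 = 0" by (simp add: Phi_zero)
      show ?thesis unfolding True continuous_within ae ze by (rule lim)
    qed
  qed
qed



definition B :: "nat \<Rightarrow> real \<Rightarrow> real" where "B j s = (pi / 4 - arctan s)^j / fact j"

lemma B_0[simp]: "B 0 s = 1" by (simp add: B_def)
lemma B_one: "B (Suc j) 1 = 0" by (simp add: B_def)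
lemma B_cont: "continuous_on A (B j)" unfolding B_def by (intro continuous_intros) simp

lemma B_deriv: "(B (Suc j) has_real_derivative - B j s / (1 + s^2)) (at s)"
proof -
  have d1: "((\<lambda>s. pi / 4 - arctan s) has_real_derivative (- (1 / (1 + s^2)))) (at s)"
    using DERIV_arctan[of s] by (auto intro!: derivative_eq_intros simp: inverse_eq_divide)
  have d2: "((\<lambda>x. x^(Suc j)) has_real_derivative (real (Suc j) * (pi / 4 - arctan s)^j)) (at (pi / 4 - arctan s))"
    using DERIV_pow[of "Suc j" "pi / 4 - arctan s"] by simp
  have d: "((\<lambda>s. (pi / 4 - arctan s)^(Suc j) / fact (Suc j)) has_real_derivative
        (real (Suc j) * (pi / 4 - arctan s)^j * (- (1 / (1 + s^2))) / fact (Suc j))) (at s)"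
    by (rule DERIV_cdivide, rule DERIV_chain2[OF d2 d1])
  have eq: "real (Suc j) * (pi / 4 - arctan s)^j * (- (1 / (1 + s^2))) / fact (Suc j) = - B j s / (1 + s^2)"
    unfolding B_def by (simp add: fact_Suc divide_simps)
  show ?thesis using d[unfolded eq] unfolding B_def[abs_def] .
qed

lemma H_integral:
  assumes m: "m \<ge> 1"
  shows "((\<lambda>s. R m e s / (1 + s^2) - (-1)^m * (lg 1 e s * (B m s / (1 + s^2)))) has_integral 0) {0..1}"
proof -
  define T where "T i s = (-1)^i * R (m - i) e s * B i s / (1 + s^2)" for i s
  define H where "H s = (\<Sum>i<m. (-1)^(Suc i) * (R (m - i) e s * B (Suc i) s))" for s
  have mi: "\<And>i. i < m \<Longrightarrow> m - i = Suc (m - Suc i)" by simp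
  have "((\<lambda>s. T 0 s - T m s) has_integral (H 1 - H 0)) {0..1}"
  proof (rule fundamental_theorem_of_calculus_interior)
    show "continuous_on {0..1} H" unfolding H_def
    proof (intro continuous_on_sum continuous_intros B_cont)
      fix i assume "i \<in> {..<m}"
      hence "m - i = Suc (m - Suc i)" by simp
      thus "continuous_on {0..1} (R (m - i) e)" using R_cont by metis
    qed
    fix u :: real assume u: "u \<in> {0<..<1}"
    have "(H has_real_derivative (\<Sum>i<m. T i u - T (Suc i) u)) (at u)"
      unfolding H_def[abs_def]
    proof (intro DERIV_sum)
      fix i assume i: "i \<in> {..<m}"
      have dR: "(R (m - i) e has_real_derivative - R (m - Suc i) e u / (1 + u^2)) (at u)"
        using R_deriv[OF u, of "m - Suc i" e] mi[of i] i by simp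
      have "((\<lambda>s. (-1)^(Suc i) * (R (m - i) e s * B (Suc i) s)) has_real_derivative
           (-1)^(Suc i) * ((- R (m - Suc i) e u / (1 + u^2)) * B (Suc i) u + (- B i u / (1 + u^2)) * R (m - i) e u)) (at u)"
        by (intro DERIV_cmult DERIV_mult dR B_deriv)
      moreover have "(-1)^(Suc i) * ((- R (m - Suc i) e u / (1 + u^2)) * B (Suc i) u + (- B i u / (1 + u^2)) * R (m - i) e u)
          = T i u - T (Suc i) u"
        unfolding T_def by (simp add: field_simps)
      ultimately show "((\<lambda>s. (-1)^(Suc i) * (R (m - i) e s * B (Suc i) s)) has_real_derivative T i u - T (Suc i) u) (at u)"
        by simp
    qed
    also have "(\<Sum>i<m. T i u - T (Suc i) u) = T 0 u - T m u" by (rule sum_lessThan_telescope')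
    finally show "(H has_vector_derivative T 0 u - T m u) (at u)"
      by (simp add: has_real_derivative_iff_has_vector_derivative)
  qed (simp)
  moreover have "H 1 = 0" unfolding H_def by (simp add: B_one)
  moreover have "H 0 = 0" unfolding H_def
    by (intro sum.neutral ballI) (metis R_zero lessThan_iff mi mult_eq_0_iff)
  moreover have "T 0 s - T m s = R m e s / (1 + s^2) - (-1)^m * (lg 1 e s * (B m s / (1 + s^2)))" for s
    unfolding T_def by (simp add: R_0)
  ultimately show ?thesis by simp
qed

lemma Rval:
  "R (Suc m) e 1 = (-1)^(Suc m) * integral {0..1} (\<lambda>s. lg 1 e s * (B m s / (1 + s^2)))"
proof -
  have ftc: "((\<lambda>s. - R m e s / (1 + s^2)) has_integral (R (Suc m) e 1 - R (Suc m) e 0)) {0..1}"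
  proof (rule fundamental_theorem_of_calculus_interior)
    show "continuous_on {0..1} (R (Suc m) e)" by (rule R_cont)
    fix u :: real assume "u \<in> {0<..<1}"
    thus "(R (Suc m) e has_vector_derivative - R m e u / (1 + u^2)) (at u)"
      using R_deriv by (simp add: has_real_derivative_iff_has_vector_derivative)
  qed simp
  hence ftc': "((\<lambda>s. - R m e s / (1 + s^2)) has_integral R (Suc m) e 1) {0..1}" by (simp add: R_zero)
  define F where "F s = lg 1 e s * (B m s / (1 + s^2))" for s
  have Fi: "F integrable_on {0..1}" unfolding F_def
    by (rule kernel_int[OF _ lg_kernel]) (auto intro!: continuous_intros B_cont intro: lg_nonneg
          simp: q_pos less_irrefl order.strict_implies_not_eq[OF q_pos, symmetric])
  show ?thesis
  proof (cases m)
    case 0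
    have "((\<lambda>s. - F s) has_integral R (Suc m) e 1) {0..1}" using ftc' unfolding F_def 0 by (simp add: R_0)
    hence "((\<lambda>s. - (- F s)) has_integral - R (Suc m) e 1) {0..1}" by (rule has_integral_neg)
    hence "integral {0..1} F = - R (Suc m) e 1" by (simp add: integral_unique)
    thus ?thesis unfolding F_def 0 by simp
  next
    case (Suc m')
    have Hm: "((\<lambda>s. R m e s / (1 + s^2) - (-1)^m * F s) has_integral 0) {0..1}"
      using H_integral[of m e] Suc unfolding F_def by simp
    have "((\<lambda>s. (R m e s / (1 + s^2) - (-1)^m * F s) + (-1)^m * F s) has_integral (0 + (-1)^m * integral {0..1} F)) {0..1}"
      by (intro has_integral_add Hm has_integral_mult_right integrable_integral Fi)
    hence "((\<lambda>s. R m e s / (1 + s^2)) has_integral (-1)^m * integral {0..1} F) {0..1}" by simp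
    hence "((\<lambda>s. - (R m e s / (1 + s^2))) has_integral - ((-1)^m * integral {0..1} F)) {0..1}"
      by (rule has_integral_neg)
    hence "((\<lambda>s. - R m e s / (1 + s^2)) has_integral - ((-1)^m * integral {0..1} F)) {0..1}" by simp
    hence "R (Suc m) e 1 = - ((-1)^m * integral {0..1} F)" using ftc' by (rule has_integral_unique[rotated])
    thus ?thesis unfolding F_def by simp
  qed
qed



lemma alg4:
  fixes x a b c d I :: real
  shows "x * (a * (b / c * (1 / d * I))) = (a * b) * x / (c * d) * I"
  by (simp add: divide_inverse mult_ac)

lemma alg5:
  fixes L P f q :: real
  shows "L * (P / f) / q = 1 / f * (L * P / q)"
  by (simp add: divide_inverse mult_ac)

lemma pp: "pi / 4 - (pi / 4 - x) = (x::real)" by simp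

theorem formula1:
  fixes k r :: nat
  assumes "0 < k" and "0 < r"
  shows "W (k + r - 1) r =
           (-1) ^ (k + r - 1) * 2 ^ r / (fact (k - 1) * fact (r - 1)) *
           integral {0..1} (\<lambda>t::real. ln ((1 - t) / (1 + t)) ^ (k - 1) * arctan t ^ (r - 1)
                                        / (1 + t\<^sup>2))"
proof -
  define e where "e = k - 1"
  obtain m where r: "r = Suc m" using assms by (cases r) auto
  define I where "I = integral {0..1} (\<lambda>t::real. ln ((1 - t) / (1 + t)) ^ (k - 1) * arctan t ^ (r - 1) / (1 + t\<^sup>2))"
  have kr: "k + r - 1 = r + e" using assms e_def by simp
  have e1: "W (k + r - 1) r = 2 ^ r * Phi r e 1"
  proof -
    have "W (k + r - 1) r = (\<Sum>ks\<in>I_set (r + e) r. 2 ^ r * Gl ks 1)"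
      unfolding W_def kr
    proof (intro sum.cong refl)
      fix ks assume ks: "ks \<in> I_set (r + e) r"
      have "ks \<noteq> []" using I_set_len[OF ks] assms by auto
      thus "Tbar ks = 2 ^ r * Gl ks 1" using Tbar_eq[OF _ I_set_pos[OF ks]] I_set_len[OF ks] by simp
    qed
    thus ?thesis unfolding Phi_def by (simp add: sum_distrib_left)
  qed
  have e2: "Phi r e 1 = (-1)^r * integral {0..1} (\<lambda>s. lg 1 e s * (B m s / (1 + s^2)))"
    using R_one[of r e] Rval[of m e] r by simp
  have e3: "integral {0..1} (\<lambda>s. lg 1 e s * (B m s / (1 + s^2)))
      = (-1)^e / fact e * integral {0..1} (\<lambda>t. ln ((1 - t) / (1 + t)) ^ e * ((pi / 4 - (pi / 4 - arctan t))^m / fact m) / (1 + t^2))"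
    unfolding B_def by (rule transform[where h = "\<lambda>x. (pi / 4 - x)^m / fact m"]) (intro continuous_intros, simp)
  have e4: "integral {0..1} (\<lambda>t. ln ((1 - t) / (1 + t)) ^ e * ((pi / 4 - (pi / 4 - arctan t))^m / fact m) / (1 + t^2))
      = 1 / fact m * I"
    unfolding I_def integral_mult_right[symmetric]
  proof (intro integral_cong)
    fix t :: real
    have m': "r - 1 = m" using r by simp
    show "ln ((1 - t) / (1 + t)) ^ e * ((pi / 4 - (pi / 4 - arctan t))^m / fact m) / (1 + t^2)
        = 1 / fact m * (ln ((1 - t) / (1 + t)) ^ (k - 1) * arctan t ^ (r - 1) / (1 + t\<^sup>2))"
      unfolding m' e_def pp by (rule alg5)
  qed
  have e5: "(-1::real)^r * (-1)^e = (-1)^(k + r - 1)"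
    unfolding kr power_add by (rule refl)
  have "W (k + r - 1) r = 2 ^ r * ((-1)^r * ((-1)^e / fact e * (1 / fact m * I)))"
    unfolding e1 e2 e3 e4 ..
  also have "\<dots> = ((-1)^r * (-1)^e) * 2 ^ r / (fact e * fact m) * I" by (rule alg4)
  also have "\<dots> = (-1) ^ (k + r - 1) * 2 ^ r / (fact (k - 1) * fact (r - 1)) * I"
    unfolding e5 using r by (simp add: e_def)
  finally show ?thesis unfolding I_def .
qed

theorem mainTheorem5:
  fixes k r :: nat
  assumes "0 < k" and "0 < r"
  shows "(W (k + r - 1) r =
           (-1) ^ (k + r - 1) * 2 ^ r / (fact (k - 1) * fact (r - 1)) *
           integral {0..1} (\<lambda>t::real. ln ((1 - t) / (1 + t)) ^ (k - 1) * arctan t ^ (r - 1)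
                                        / (1 + t\<^sup>2))) \<and>
         (Tbar (replicate (r - 1) 1 @ [k]) =
           (-1) ^ (k + r - 1) * 2 ^ r / (fact (k - 1) * fact (r - 1)) *
           integral {0..1} (\<lambda>t::real. ln ((1 - t) / (1 + t)) ^ (k - 1) * (pi / 4 - arctan t) ^ (r - 1)
                                        / (1 + t\<^sup>2)))"
  using formula1[OF assms] formula2[OF assms] by blast


end
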